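(* The unary unbiased black-box complexity of the $\mathrm{DLB}$ problem is $\Omega(n^2)$.
   Context: Let $n$ be an even positive integer. For $x\in\{0,1\}^n$ consider the blocks $(x_{2\ell+1},x_{2\ell+2})$, $\ell=0,\dots,\frac n2-1$. If $x\neq(1,\dots,1)$, let $m$ be the smallest $\ell$ with $x_{2\ell+1}\neq 1$ or $x_{2\ell+2}\neq 1$, and define $\mathrm{DLB}(x)=2m+1$ if $x_{2m+1}+x_{2m+2}=0$ and $\mathrm{DLB}(x)=2m$ if $x_{2m+1}+x_{2m+2}=1$; set $\mathrm{DLB}(1,\dots,1)=n$. The $\mathrm{DLB}$ problem is to maximize $\mathrm{DLB}$. A unary unbiased variation operator $V$ assigns to each $x\in\{0,1\}^n$ a probability distribution $V(x)$ on $\{0,1\}^n$ such that for all $x,y,z$, $\Pr[y=V(x)]=\Pr[y\oplus z=V(x\oplus z)]$, and for all permutations $\sigma$ of $[1..n]$, $\Pr[y=V(x)]=\Pr[\sigma(y)=V(\sigma(x))]$, where $\sigma(x)=(x_{\sigma(1)},\dots,x_{\sigma(n)})$. A unary unbiased black-box algorithm generates $x^{(0)}$ uniformly at random; for $t=1,2,\dots$, based solely on $(f(x^{(0)}),\dots,f(x^{(t-1)}))$, it chooses a unary unbiased variation operator $V$ and an index $i\in[0..t-1]$ and samples $x^{(t)}\sim V(x^{(i)})$; each search point is evaluated when generated. The runtime is the number of fitness evaluations until (and including) the first evaluation of an optimum. The unary unbiased black-box complexity of $\mathrm{DLB}$ is the infimum over all such algorithms of the expected runtime on $\mathrm{DLB}$.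 *)

theory Defs
  imports "HOL-Probability.Probability" "HOL-Combinatorics.Permutations"
begin

text \<open>Bit strings of length n are boolean lists of length n; position i (0-based)
  corresponds to x_{i+1} in the paper.\<close>

definition bitstrings :: "nat \<Rightarrow> bool list set" where
  "bitstrings n = {x. length x = n}"

text \<open>The DLB function (n even). Block l consists of positions 2l and 2l+1 (0-based).\<close>
definition dlb :: "nat \<Rightarrow> bool list \<Rightarrow> nat" where
  "dlb n x =
    (if \<forall>l < n div 2. x ! (2*l) \<and> x ! (2*l+1) then n
     else (let m = (LEAST l. l < n div 2 \<and> \<not> (x ! (2*l) \<and> x ! (2*l+1)))
           in if \<not> x ! (2*m) \<and> \<not> x ! (2*m+1) then 2*m+1 else 2*m))"

definition xor_bits :: "bool list \<Rightarrow> bool list \<Rightarrow> bool list" where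
  "xor_bits x z = map2 (\<noteq>) x z"

definition perm_bits :: "nat \<Rightarrow> (nat \<Rightarrow> nat) \<Rightarrow> bool list \<Rightarrow> bool list" where
  "perm_bits n \<sigma> x = map (\<lambda>i. x ! \<sigma> i) [0..<n]"

type_synonym variation_op = "bool list \<Rightarrow> bool list pmf"

definition unary_unbiased_op :: "nat \<Rightarrow> variation_op \<Rightarrow> bool" where
  "unary_unbiased_op n V \<longleftrightarrow>
     (\<forall>x \<in> bitstrings n. set_pmf (V x) \<subseteq> bitstrings n) \<and>
     (\<forall>x \<in> bitstrings n. \<forall>y \<in> bitstrings n. \<forall>z \<in> bitstrings n.
        pmf (V x) y = pmf (V (xor_bits x z)) (xor_bits y z)) \<and>
     (\<forall>x \<in> bitstrings n. \<forall>y \<in> bitstrings n. \<forall>\<sigma>. \<sigma> permutes {0..<n} \<longrightarrow>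
        pmf (V x) y = pmf (V (perm_bits n \<sigma> x)) (perm_bits n \<sigma> y))"

text \<open>A unary unbiased black-box algorithm: given the fitness history
  (f(x^(0)), ..., f(x^(t-1))), it (possibly randomly) chooses a unary unbiased
  variation operator V and an index i < t.\<close>
type_synonym ub_algorithm = "nat list \<Rightarrow> (variation_op \<times> nat) pmf"

definition unary_unbiased_alg :: "nat \<Rightarrow> ub_algorithm \<Rightarrow> bool" where
  "unary_unbiased_alg n A \<longleftrightarrow>
     (\<forall>hs. hs \<noteq> [] \<longrightarrow> (\<forall>(V, i) \<in> set_pmf (A hs). i < length hs \<and> unary_unbiased_op n V))"

text \<open>Distribution of the first k+1 search points (x^(0), ..., x^(k)).\<close>
fun history :: "nat \<Rightarrow> (bool list \<Rightarrow> nat) \<Rightarrow> ub_algorithm \<Rightarrow> nat \<Rightarrow> bool list list pmf" where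
  "history n f A 0 = map_pmf (\<lambda>x. [x]) (pmf_of_set (bitstrings n))"
| "history n f A (Suc k) =
     bind_pmf (history n f A k) (\<lambda>xs.
       bind_pmf (A (map f xs)) (\<lambda>(V, i). map_pmf (\<lambda>y. xs @ [y]) (V (xs ! i))))"

definition is_optimum :: "nat \<Rightarrow> (bool list \<Rightarrow> nat) \<Rightarrow> bool list \<Rightarrow> bool" where
  "is_optimum n f x \<longleftrightarrow> x \<in> bitstrings n \<and> (\<forall>y \<in> bitstrings n. f y \<le> f x)"

text \<open>Expected runtime T (number of evaluations up to and including the first optimum),
  via E[T] = sum_{k>=0} Pr[T > k] = sum_k Pr[none of x^(0..k) optimal]; this is
  infinite if the optimum is not found with probability 1.\<close>
definition expected_runtime :: "nat \<Rightarrow> (bool list \<Rightarrow> nat) \<Rightarrow> ub_algorithm \<Rightarrow> ennreal" where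
  "expected_runtime n f A =
     (\<Sum>k. ennreal (measure_pmf.prob (history n f A k) {xs. \<forall>x \<in> set xs. \<not> is_optimum n f x}))"

definition unary_unbiased_bbc :: "nat \<Rightarrow> (bool list \<Rightarrow> nat) \<Rightarrow> ennreal" where
  "unary_unbiased_bbc n f = (INF A \<in> {A. unary_unbiased_alg n A}. expected_runtime n f A)"

end

theory Submission
  imports Defs
begin

definition ones :: "bool list \<Rightarrow> nat \<Rightarrow> bool" where
  "ones x k \<longleftrightarrow> (\<forall>j<k. x ! j)"
definition zeros :: "bool list \<Rightarrow> nat \<Rightarrow> bool" where
  "zeros x k \<longleftrightarrow> (\<forall>j<k. \<not> x ! j)"

definition phi :: "nat \<Rightarrow> bool list \<Rightarrow> nat" where
  "phi n x = Max {k. k \<le> n div 2 \<and> (ones x (2*k) \<or> zeros x (2*k))}"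

fun Phi :: "nat \<Rightarrow> bool list list \<Rightarrow> nat" where
  "Phi n [] = 0"
| "Phi n (x # xs) = max (phi n x) (Phi n xs)"

lemma phi_set_finite: "finite {k. k \<le> n div 2 \<and> (ones x (2*k) \<or> zeros x (2*k))}"
  by (rule finite_subset[of _ "{..n div 2}"]) auto

lemma phi_in: "phi n x \<le> n div 2 \<and> (ones x (2 * phi n x) \<or> zeros x (2 * phi n x))"
proof -
  have "0 \<in> {k. k \<le> n div 2 \<and> (ones x (2*k) \<or> zeros x (2*k))}" by (simp add: ones_def)
  then have "phi n x \<in> {k. k \<le> n div 2 \<and> (ones x (2*k) \<or> zeros x (2*k))}"
    unfolding phi_def using phi_set_finite by (intro Max_in) auto
  then show ?thesis by simp
qed

lemma ones_mono: "ones x k \<Longrightarrow> j \<le> k \<Longrightarrow> ones x j"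
  by (auto simp: ones_def)
lemma zeros_mono: "zeros x k \<Longrightarrow> j \<le> k \<Longrightarrow> zeros x j"
  by (auto simp: zeros_def)

lemma phi_ge_iff: "k \<le> phi n x \<longleftrightarrow> k \<le> n div 2 \<and> (ones x (2*k) \<or> zeros x (2*k))"
proof
  assume "k \<le> phi n x"
  then show "k \<le> n div 2 \<and> (ones x (2*k) \<or> zeros x (2*k))"
    using phi_in[of n x] ones_mono[of x "2 * phi n x" "2*k"] zeros_mono[of x "2 * phi n x" "2*k"]
    by auto
next
  assume "k \<le> n div 2 \<and> (ones x (2*k) \<or> zeros x (2*k))"
  then show "k \<le> phi n x" unfolding phi_def using phi_set_finite by (intro Max_ge) auto
qed

lemma phi_le: "phi n x \<le> n div 2"
  using phi_in by blast

lemma Phi_snoc: "Phi n (xs @ [y]) = max (Phi n xs) (phi n y)"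
  by (induction xs) auto

lemma Phi_ge: "x \<in> set xs \<Longrightarrow> phi n x \<le> Phi n xs"
  by (induction xs) auto

lemma Phi_le: "Phi n xs \<le> n div 2"
  by (induction xs) (auto simp: phi_le)

lemma length_xor[simp]: "length (xor_bits x z) = min (length x) (length z)"
  by (simp add: xor_bits_def)

lemma nth_xor[simp]: "i < length x \<Longrightarrow> i < length z \<Longrightarrow> xor_bits x z ! i = (x ! i \<noteq> z ! i)"
  by (simp add: xor_bits_def)

lemma xor_in_bitstrings: "x \<in> bitstrings n \<Longrightarrow> z \<in> bitstrings n \<Longrightarrow> xor_bits x z \<in> bitstrings n"
  by (simp add: bitstrings_def)

lemma xor_xor: "x \<in> bitstrings n \<Longrightarrow> z \<in> bitstrings n \<Longrightarrow> xor_bits (xor_bits x z) z = x"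
  by (rule nth_equalityI) (auto simp: bitstrings_def)

lemma agree_phi:
  assumes x: "x \<in> bitstrings n" and x': "x' \<in> bitstrings n"
    and ag: "\<And>i. i < n \<Longrightarrow> i < 2 * phi n x + 2 \<Longrightarrow> x ! i = x' ! i"
  shows "phi n x' = phi n x"
proof -
  have tr: "ones x (2*k) = ones x' (2*k) \<and> zeros x (2*k) = zeros x' (2*k)"
    if "k \<le> n div 2" "2 * k \<le> 2 * phi n x + 2" for k
  proof -
    have h: "2 * (n div 2) \<le> n" by simp
    have "j < n \<and> j < 2 * phi n x + 2" if "j < 2*k" for j using that h \<open>k \<le> n div 2\<close> \<open>2 * k \<le> 2 * phi n x + 2\<close> by linarith
    then show ?thesis using ag unfolding ones_def zeros_def by auto
  qed
  have "phi n x \<le> phi n x'"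
    using phi_in[of n x] tr[of "phi n x"] by (subst phi_ge_iff) auto
  moreover have "\<not> phi n x + 1 \<le> phi n x'"
  proof
    assume "phi n x + 1 \<le> phi n x'"
    then have "phi n x + 1 \<le> n div 2 \<and> (ones x' (2*(phi n x + 1)) \<or> zeros x' (2*(phi n x + 1)))"
      using phi_ge_iff by blast
    then have "phi n x + 1 \<le> phi n x" using tr[of "phi n x + 1"] by (subst phi_ge_iff) auto
    then show False by simp
  qed
  ultimately show ?thesis by simp
qed

lemma agree_dlb:
  assumes x: "x \<in> bitstrings n" and x': "x' \<in> bitstrings n"
    and ag: "\<And>i. i < n \<Longrightarrow> i < 2 * phi n x + 2 \<Longrightarrow> x ! i = x' ! i"
  shows "dlb n x' = dlb n x"
proof (cases "\<forall>l < n div 2. x ! (2*l) \<and> x ! (2*l+1)")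
  case True
  have "ones x (2 * (n div 2))" unfolding ones_def
  proof (intro allI impI)
    fix j assume j: "j < 2 * (n div 2)"
    then have "j div 2 < n div 2" by linarith
    then have "x ! (2 * (j div 2)) \<and> x ! (2 * (j div 2) + 1)" using True by blast
    moreover have "j = 2 * (j div 2) \<or> j = 2 * (j div 2) + 1" by linarith
    ultimately show "x ! j" by metis
  qed
  then have "phi n x = n div 2" using phi_ge_iff[of "n div 2" n x] phi_le[of n x] by auto
  then have "x = x'" using ag x x' by (intro nth_equalityI) (auto simp: bitstrings_def)
  then show ?thesis by simp
next
  case False
  define P where "P = (\<lambda>y l. l < n div 2 \<and> \<not> (y ! (2*l) \<and> y ! (2*l+1)))"
  define m where "m = (LEAST l. P x l)"
  have Pm: "P x m" unfolding m_def using False by (metis LeastI P_def)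
  have lt: "l < m \<Longrightarrow> \<not> P x l" for l unfolding m_def by (rule not_less_Least)
  have "ones x (2*m)" unfolding ones_def
  proof (intro allI impI)
    fix j assume "j < 2*m"
    then have "j div 2 < m" by linarith
    then have "\<not> P x (j div 2)" by (rule lt)
    moreover have "j div 2 < n div 2" using \<open>j div 2 < m\<close> Pm P_def by auto
    ultimately show "x ! j" unfolding P_def
      by (metis dvd_mult_div_cancel odd_two_times_div_two_succ dvd_def)
  qed
  then have "m \<le> phi n x" using Pm by (subst phi_ge_iff) (auto simp: P_def)
  have agb: "l \<le> m \<Longrightarrow> (x ! (2*l) = x' ! (2*l)) \<and> (x ! (2*l+1) = x' ! (2*l+1))" for l
    using ag Pm \<open>m \<le> phi n x\<close> unfolding P_def by auto
  have Px': "P x' l = P x l" if "l \<le> m" for l using agb[OF that] unfolding P_def by auto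
  have F': "\<not> (\<forall>l < n div 2. x' ! (2*l) \<and> x' ! (2*l+1))"
    using Px'[of m] Pm unfolding P_def by auto
  have m': "(LEAST l. P x' l) = m"
  proof (rule Least_equality)
    show "P x' m" using Px'[of m] Pm by simp
    show "m \<le> l" if "P x' l" for l
    proof (rule ccontr)
      assume "\<not> m \<le> l" then have "l < m" by simp
      then show False using Px'[of l] that lt[of l] by simp
    qed
  qed
  show ?thesis using False F' m' agb[of m] unfolding dlb_def Let_def P_def m_def by auto
qed



lemma unb_xor: "unary_unbiased_op n V \<Longrightarrow> x \<in> bitstrings n \<Longrightarrow> y \<in> bitstrings n \<Longrightarrow> z \<in> bitstrings n
   \<Longrightarrow> pmf (V x) y = pmf (V (xor_bits x z)) (xor_bits y z)"
  unfolding unary_unbiased_op_def by blast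

lemma unb_perm: "unary_unbiased_op n V \<Longrightarrow> x \<in> bitstrings n \<Longrightarrow> y \<in> bitstrings n \<Longrightarrow> \<sigma> permutes {0..<n}
   \<Longrightarrow> pmf (V x) y = pmf (V (perm_bits n \<sigma> x)) (perm_bits n \<sigma> y)"
  unfolding unary_unbiased_op_def by blast

lemma unb_set: "unary_unbiased_op n V \<Longrightarrow> x \<in> bitstrings n \<Longrightarrow> set_pmf (V x) \<subseteq> bitstrings n"
  unfolding unary_unbiased_op_def by blast

lemma alg_D: "unary_unbiased_alg n A \<Longrightarrow> hs \<noteq> [] \<Longrightarrow> (V, i) \<in> set_pmf (A hs) \<Longrightarrow>
   i < length hs \<and> unary_unbiased_op n V"
  unfolding unary_unbiased_alg_def by fastforce

lemma finite_bitstrings: "finite (bitstrings n)"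
proof -
  have "bitstrings n = {xs. set xs \<subseteq> (UNIV::bool set) \<and> length xs = n}"
    by (auto simp: bitstrings_def)
  then show ?thesis using finite_lists_length_eq[of "UNIV::bool set" n] by simp
qed

lemma card_bitstrings: "card (bitstrings n) = 2 ^ n"
proof -
  have "bitstrings n = {xs. set xs \<subseteq> (UNIV::bool set) \<and> length xs = n}"
    by (auto simp: bitstrings_def)
  then show ?thesis using card_lists_length_eq[of "UNIV::bool set" n] by simp
qed

lemma bitstrings_ne: "bitstrings n \<noteq> {}"
  by (auto simp: bitstrings_def intro!: exI[of _ "replicate n True"])

lemma set_pmf_history:
  assumes alg: "unary_unbiased_alg n A"
  shows "xs \<in> set_pmf (history n f A t) \<Longrightarrow> length xs = Suc t \<and> set xs \<subseteq> bitstrings n"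
proof (induction t arbitrary: xs)
  case 0
  then show ?case using finite_bitstrings bitstrings_ne by auto
next
  case (Suc t)
  from Suc.prems obtain zs V i y where zs: "zs \<in> set_pmf (history n f A t)"
    and Vi: "(V, i) \<in> set_pmf (A (map f zs))" and y: "y \<in> set_pmf (V (zs ! i))"
    and xs: "xs = zs @ [y]"
    by auto
  have zs': "length zs = Suc t \<and> set zs \<subseteq> bitstrings n" using Suc.IH zs by blast
  then have "map f zs \<noteq> []" by auto
  then have "i < length zs \<and> unary_unbiased_op n V" using alg_D[OF alg _ Vi] by simp
  then have "y \<in> bitstrings n" using y zs' unb_set
    by (meson nth_mem subsetD)
  then show ?case using xs zs' by auto
qed

lemma integral_if_eq:
  "(\<integral>x. (if x = a then c else 0) \<partial>measure_pmf M) = pmf M a * (c::real)"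
proof -
  have "(\<integral>x. (if x = a then c else 0) \<partial>measure_pmf M) = (\<integral>x. indicator {a} x * c \<partial>measure_pmf M)"
    by (intro Bochner_Integration.integral_cong) (auto split: split_indicator)
  also have "\<dots> = measure (measure_pmf M) {a} * c" by simp
  also have "\<dots> = pmf M a * c" by (simp add: measure_pmf_single)
  finally show ?thesis .
qed

lemma pmf_history_snoc:
  assumes alg: "unary_unbiased_alg n A" and len: "length zs = Suc t"
  shows "pmf (history n f A (Suc t)) (zs @ [y]) =
    pmf (history n f A t) zs * (\<integral>Vi. pmf (fst Vi (zs ! snd Vi)) y \<partial>measure_pmf (A (map f zs)))"
proof -
  define c where "c = (\<integral>Vi. pmf (fst Vi (zs ! snd Vi)) y \<partial>measure_pmf (A (map f zs)))"
  have inner: "pmf (bind_pmf (A (map f xs')) (\<lambda>(V, i). map_pmf (\<lambda>y. xs' @ [y]) (V (xs' ! i)))) (zs @ [y])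
      = (if xs' = zs then c else 0)" if "xs' \<in> set_pmf (history n f A t)" for xs'
  proof -
    have lx: "length xs' = Suc t" using set_pmf_history[OF alg that] by simp
    have "pmf (bind_pmf (A (map f xs')) (\<lambda>(V, i). map_pmf (\<lambda>y. xs' @ [y]) (V (xs' ! i)))) (zs @ [y])
       = (\<integral>Vi. pmf (map_pmf (\<lambda>y. xs' @ [y]) (fst Vi (xs' ! snd Vi))) (zs @ [y]) \<partial>measure_pmf (A (map f xs')))"
      by (simp add: pmf_bind case_prod_beta)
    also have "\<dots> = (if xs' = zs then c else 0)"
    proof (cases "xs' = zs")
      case True
      have "inj (\<lambda>y. zs @ [y])" by (auto intro: injI)
      have "pmf (map_pmf (\<lambda>y. zs @ [y]) D) (zs @ [y]) = pmf D y" for D :: "bool list pmf"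
        using pmf_map_inj'[OF \<open>inj (\<lambda>y. zs @ [y])\<close>, of D y] by simp
      then show ?thesis using True by (simp add: c_def)
    next
      case False
      have "pmf (map_pmf (\<lambda>y. xs' @ [y]) D) (zs @ [y]) = 0" for D :: "bool list pmf"
        using False lx len by (auto simp: pmf_eq_0_set_pmf)
      then show ?thesis using False by simp
    qed
    finally show ?thesis .
  qed
  have "pmf (history n f A (Suc t)) (zs @ [y]) =
     (\<integral>xs'. pmf (bind_pmf (A (map f xs')) (\<lambda>(V, i). map_pmf (\<lambda>y. xs' @ [y]) (V (xs' ! i)))) (zs @ [y])
        \<partial>measure_pmf (history n f A t))"
    by (simp add: pmf_bind)
  also have "\<dots> = (\<integral>xs'. (if xs' = zs then c else 0) \<partial>measure_pmf (history n f A t))"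
    by (intro integral_cong_AE AE_pmfI; simp add: inner)
  also have "\<dots> = pmf (history n f A t) zs * c" by (rule integral_if_eq)
  finally show ?thesis unfolding c_def .
qed

definition Tu :: "bool list \<Rightarrow> bool list list \<Rightarrow> bool list list" where
  "Tu u xs = map (\<lambda>x. xor_bits x u) xs"

lemma Tu_point:
  assumes x: "x \<in> bitstrings n" and u: "u \<in> bitstrings n"
    and uz: "\<And>i. i < n \<Longrightarrow> i < 2 * B + 2 \<Longrightarrow> \<not> u ! i" and le: "phi n x \<le> B"
  shows "phi n (xor_bits x u) = phi n x \<and> dlb n (xor_bits x u) = dlb n x"
proof -
  have ag: "x ! i = xor_bits x u ! i" if "i < n" "i < 2 * phi n x + 2" for i
    using that x u uz[of i] le by (auto simp: bitstrings_def)
  show ?thesis using agree_phi[OF x xor_in_bitstrings[OF x u] ag] agree_dlb[OF x xor_in_bitstrings[OF x u] ag]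
    by auto
qed

lemma Phi_map_eq: "(\<And>x. x \<in> set xs \<Longrightarrow> phi n (h x) = phi n x) \<Longrightarrow> Phi n (map h xs) = Phi n xs"
  by (induction xs) auto

lemma Tu_props:
  assumes xs: "set xs \<subseteq> bitstrings n" and u: "u \<in> bitstrings n"
    and uz: "\<And>i. i < n \<Longrightarrow> i < 2 * Phi n xs + 2 \<Longrightarrow> \<not> u ! i"
  shows "Phi n (Tu u xs) = Phi n xs" "map (dlb n) (Tu u xs) = map (dlb n) xs"
    "set (Tu u xs) \<subseteq> bitstrings n" "Tu u (Tu u xs) = xs"
proof -
  have pt: "phi n (xor_bits x u) = phi n x \<and> dlb n (xor_bits x u) = dlb n x" if "x \<in> set xs" for x
    using Tu_point[of x n u "Phi n xs"] that xs u uz Phi_ge[OF that, of n] by auto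
  show "Phi n (Tu u xs) = Phi n xs" unfolding Tu_def using pt by (intro Phi_map_eq) auto
  show "map (dlb n) (Tu u xs) = map (dlb n) xs" unfolding Tu_def using pt by auto
  show "set (Tu u xs) \<subseteq> bitstrings n" unfolding Tu_def using xs u xor_in_bitstrings by auto
  show "Tu u (Tu u xs) = xs" unfolding Tu_def using xs u xor_xor
    by (induction xs) auto
qed

lemma hist_inv:
  assumes alg: "unary_unbiased_alg n A"
  shows "length xs = Suc t \<Longrightarrow> set xs \<subseteq> bitstrings n \<Longrightarrow> u \<in> bitstrings n \<Longrightarrow>
    (\<And>i. i < n \<Longrightarrow> i < 2 * Phi n xs + 2 \<Longrightarrow> \<not> u ! i) \<Longrightarrow>
    pmf (history n (dlb n) A t) (Tu u xs) = pmf (history n (dlb n) A t) xs"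
proof (induction t arbitrary: xs)
  case 0
  then obtain x where xs: "xs = [x]" by (metis length_0_conv length_Suc_conv)
  have inj: "inj (\<lambda>x::bool list. [x])" by (auto intro: injI)
  have "x \<in> bitstrings n" "xor_bits x u \<in> bitstrings n" using 0 xs xor_in_bitstrings by auto
  have pm: "pmf (map_pmf (\<lambda>x. [x]) D) [a] = pmf D a" for D :: "bool list pmf" and a
    using pmf_map_inj'[OF inj, of D a] by simp
  show ?case using xs finite_bitstrings \<open>x \<in> bitstrings n\<close> \<open>xor_bits x u \<in> bitstrings n\<close>
    by (simp add: Tu_def pm bitstrings_ne)
next
  case (Suc t)
  obtain zs y where xs: "xs = zs @ [y]" using Suc.prems(1) by (metis length_Suc_conv_rev)
  have lz: "length zs = Suc t" using Suc.prems(1) xs by simp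
  have zsb: "set zs \<subseteq> bitstrings n" and yb: "y \<in> bitstrings n" using Suc.prems(2) xs by auto
  have PhiZ: "Phi n zs \<le> Phi n xs" using xs Phi_snoc by simp
  have uz: "\<not> u ! i" if "i < n" "i < 2 * Phi n zs + 2" for i using Suc.prems(4) that PhiZ by simp
  note TP = Tu_props[OF zsb Suc.prems(3) uz]
  have IH: "pmf (history n (dlb n) A t) (Tu u zs) = pmf (history n (dlb n) A t) zs"
    using Suc.IH[OF lz zsb Suc.prems(3) uz] .
  have Txs: "Tu u (zs @ [y]) = Tu u zs @ [xor_bits y u]" by (simp add: Tu_def)
  have lTz: "length (Tu u zs) = Suc t" using lz by (simp add: Tu_def)
  have ptw: "pmf (fst Vi (Tu u zs ! snd Vi)) (xor_bits y u) = pmf (fst Vi (zs ! snd Vi)) y"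
    if Vi: "Vi \<in> set_pmf (A (map (dlb n) zs))" for Vi
  proof -
    obtain V i where Vi': "Vi = (V, i)" by (cases Vi)
    have "map (dlb n) zs \<noteq> []" using lz by auto
    then have iV: "i < length zs \<and> unary_unbiased_op n V" using alg_D[OF alg, of "map (dlb n) zs" V i] Vi unfolding Vi' by simp
    moreover have zi: "zs ! i \<in> bitstrings n" using iV zsb by auto
    ultimately have "pmf (V (zs ! i)) y = pmf (V (xor_bits (zs ! i) u)) (xor_bits y u)"
      using unb_xor yb Suc.prems(3) by blast
    moreover have "Tu u zs ! i = xor_bits (zs ! i) u" using iV by (simp add: Tu_def)
    ultimately show ?thesis using Vi' by simp
  qed
  have eqI: "(\<integral>Vi. pmf (fst Vi (Tu u zs ! snd Vi)) (xor_bits y u) \<partial>measure_pmf (A (map (dlb n) (Tu u zs))))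
     = (\<integral>Vi. pmf (fst Vi (zs ! snd Vi)) y \<partial>measure_pmf (A (map (dlb n) zs)))"
  proof -
    have "(\<integral>Vi. pmf (fst Vi (Tu u zs ! snd Vi)) (xor_bits y u) \<partial>measure_pmf (A (map (dlb n) (Tu u zs))))
      = (\<integral>Vi. pmf (fst Vi (Tu u zs ! snd Vi)) (xor_bits y u) \<partial>measure_pmf (A (map (dlb n) zs)))"
      using TP(2) by simp
    also have "\<dots> = (\<integral>Vi. pmf (fst Vi (zs ! snd Vi)) y \<partial>measure_pmf (A (map (dlb n) zs)))"
      by (intro integral_cong_AE AE_pmfI; simp add: ptw)
    finally show ?thesis .
  qed
  have "pmf (history n (dlb n) A (Suc t)) (Tu u zs @ [xor_bits y u]) =
    pmf (history n (dlb n) A t) (Tu u zs) * (\<integral>Vi. pmf (fst Vi (Tu u zs ! snd Vi)) (xor_bits y u) \<partial>measure_pmf (A (map (dlb n) (Tu u zs))))"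
    by (rule pmf_history_snoc[OF alg lTz])
  also have "\<dots> = pmf (history n (dlb n) A t) zs * (\<integral>Vi. pmf (fst Vi (zs ! snd Vi)) y \<partial>measure_pmf (A (map (dlb n) zs)))"
    by (simp only: IH eqI)
  also have "\<dots> = pmf (history n (dlb n) A (Suc t)) (zs @ [y])"
    by (rule pmf_history_snoc[OF alg lz, symmetric])
  finally show ?case by (simp only: xs Txs)
qed



lemma pmf_map_invol:
  assumes sup: "set_pmf M \<subseteq> B" and fB: "\<And>y. y \<in> B \<Longrightarrow> f y \<in> B"
    and ff: "\<And>y. y \<in> B \<Longrightarrow> f (f y) = y"
  shows "pmf (map_pmf f M) y = (if y \<in> B then pmf M (f y) else 0)"
proof -
  have "pmf (map_pmf f M) y = measure M (f -` {y} \<inter> set_pmf M)"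
    by (simp add: pmf_map measure_Int_set_pmf)
  also have "f -` {y} \<inter> set_pmf M = (if y \<in> B then {f y} \<inter> set_pmf M else {})"
    using sup fB ff by auto
  finally show ?thesis by (simp add: measure_Int_set_pmf measure_pmf_single)
qed

lemma V_xor_map:
  assumes V: "unary_unbiased_op n V" and x: "x \<in> bitstrings n" and z: "z \<in> bitstrings n"
  shows "V (xor_bits x z) = map_pmf (\<lambda>y. xor_bits y z) (V x)"
proof (rule pmf_eqI)
  fix y
  have xz: "xor_bits x z \<in> bitstrings n" using x z by (rule xor_in_bitstrings)
  have r: "pmf (map_pmf (\<lambda>y. xor_bits y z) (V x)) y =
      (if y \<in> bitstrings n then pmf (V x) (xor_bits y z) else 0)"
    using unb_set[OF V x] xor_in_bitstrings[OF _ z] xor_xor[OF _ z]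
    by (intro pmf_map_invol) auto
  show "pmf (V (xor_bits x z)) y = pmf (map_pmf (\<lambda>y. xor_bits y z) (V x)) y"
  proof (cases "y \<in> bitstrings n")
    case True
    have "pmf (V x) (xor_bits y z) = pmf (V (xor_bits x z)) (xor_bits (xor_bits y z) z)"
      using unb_xor[OF V x xor_in_bitstrings[OF True z] z] .
    then show ?thesis using r True xor_xor[OF True z] by simp
  next
    case False
    then have "y \<notin> set_pmf (V (xor_bits x z))" using unb_set[OF V xz] by auto
    then show ?thesis using r False by (simp add: set_pmf_iff)
  qed
qed

lemma length_perm_bits[simp]: "length (perm_bits n \<sigma> x) = n"
  by (simp add: perm_bits_def)

lemma nth_perm_bits[simp]: "i < n \<Longrightarrow> perm_bits n \<sigma> x ! i = x ! \<sigma> i"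
  by (simp add: perm_bits_def)

lemma V_transp_map:
  assumes V: "unary_unbiased_op n V" and x: "x \<in> bitstrings n" and a: "a < n" and b: "b < n"
  shows "V (perm_bits n (Transposition.transpose a b) x) =
    map_pmf (perm_bits n (Transposition.transpose a b)) (V x)"
proof (rule pmf_eqI)
  fix y
  define \<sigma> where "\<sigma> = Transposition.transpose a b"
  have sp: "\<sigma> permutes {0..<n}" unfolding \<sigma>_def using a b by (intro permutes_swap_id) auto
  have sl: "\<sigma> i < n" if "i < n" for i unfolding \<sigma>_def using that a b
    by (auto simp: Transposition.transpose_def)
  have pb: "perm_bits n \<sigma> y \<in> bitstrings n" for y by (simp add: bitstrings_def)
  have pp: "perm_bits n \<sigma> (perm_bits n \<sigma> y) = y" if "y \<in> bitstrings n" for y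
    using that sl by (intro nth_equalityI) (auto simp: bitstrings_def \<sigma>_def)
  have r: "pmf (map_pmf (perm_bits n \<sigma>) (V x)) y =
      (if y \<in> bitstrings n then pmf (V x) (perm_bits n \<sigma> y) else 0)"
    using unb_set[OF V x] pb pp by (intro pmf_map_invol) auto
  show "pmf (V (perm_bits n (Transposition.transpose a b) x)) y =
    pmf (map_pmf (perm_bits n (Transposition.transpose a b)) (V x)) y"
    unfolding \<sigma>_def[symmetric]
  proof (cases "y \<in> bitstrings n")
    case True
    have "pmf (V x) (perm_bits n \<sigma> y) = pmf (V (perm_bits n \<sigma> x)) (perm_bits n \<sigma> (perm_bits n \<sigma> y))"
      using unb_perm[OF V x pb sp] .
    then show "pmf (V (perm_bits n \<sigma> x)) y = pmf (map_pmf (perm_bits n \<sigma>) (V x)) y"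
      using r True pp[OF True] by simp
  next
    case False
    then have "y \<notin> set_pmf (V (perm_bits n \<sigma> x))" using unb_set[OF V pb] by auto
    then show "pmf (V (perm_bits n \<sigma> x)) y = pmf (map_pmf (perm_bits n \<sigma>) (V x)) y"
      using r False by (simp add: set_pmf_iff)
  qed
qed

definition delta :: "nat \<Rightarrow> nat \<Rightarrow> nat \<Rightarrow> bool list" where
  "delta n a k = map (\<lambda>j. j = a \<or> j = k) [0..<n]"

lemma delta_bits: "delta n a k \<in> bitstrings n" by (simp add: delta_def bitstrings_def)

lemma fam_eq:
  assumes V: "unary_unbiased_op n V" and x: "x \<in> bitstrings n" and L: "L \<le> n"
    and a: "a < L" and k: "k < L" and xk: "x ! k \<noteq> x ! a"
  shows "measure (V x) {y. ones y L} = measure (V x) {y. y \<in> bitstrings n \<and> ones (xor_bits y (delta n a k)) L}"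
proof -
  define \<sigma> where "\<sigma> = Transposition.transpose a k"
  have pe: "perm_bits n \<sigma> x = xor_bits x (delta n a k)"
  proof (rule nth_equalityI)
    have ln: "length x = n" using x by (simp add: bitstrings_def)
    have nd: "length (delta n a k) = n" by (simp add: delta_def)
    show "length (perm_bits n \<sigma> x) = length (xor_bits x (delta n a k))" using ln nd by simp
    fix i assume "i < length (perm_bits n \<sigma> x)"
    then have i: "i < n" by simp
    have dl: "delta n a k ! i = (i = a \<or> i = k)" using i by (simp add: delta_def)
    have xo: "xor_bits x (delta n a k) ! i = (x ! i \<noteq> (i = a \<or> i = k))"
      using i ln nd dl by simp
    show "perm_bits n \<sigma> x ! i = xor_bits x (delta n a k) ! i"
    proof (cases "i = a")
      case True
      then show ?thesis using i xo xk by (simp add: \<sigma>_def)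
    next
      case False
      show ?thesis
      proof (cases "i = k")
        case True
        then show ?thesis using i xo xk False by (simp add: \<sigma>_def)
      next
        case False2: False
        then show ?thesis using i xo False by (simp add: \<sigma>_def)
      qed
    qed
  qed
  have "map_pmf (perm_bits n \<sigma>) (V x) = map_pmf (\<lambda>y. xor_bits y (delta n a k)) (V x)"
    using V_transp_map[OF V x, of a k] V_xor_map[OF V x delta_bits] pe a k L unfolding \<sigma>_def by simp
  then have eq: "measure (V x) (perm_bits n \<sigma> -` {y. ones y L}) =
     measure (V x) ((\<lambda>y. xor_bits y (delta n a k)) -` {y. ones y L})"
    by (metis measure_map_pmf)
  have s: "set_pmf (V x) \<subseteq> bitstrings n" by (rule unb_set[OF V x])
  have "perm_bits n \<sigma> -` {y. ones y L} \<inter> set_pmf (V x) = {y. ones y L} \<inter> set_pmf (V x)"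
  proof -
    have "ones (perm_bits n \<sigma> y) L = ones y L" if "y \<in> bitstrings n" for y
    proof -
      have "(\<forall>j<L. y ! \<sigma> j) = (\<forall>j<L. y ! j)"
      proof
        assume h: "\<forall>j<L. y ! \<sigma> j"
        show "\<forall>j<L. y ! j"
        proof (intro allI impI)
          fix j assume "j < L"
          then have "\<sigma> j < L" using a k by (auto simp: \<sigma>_def Transposition.transpose_def)
          then show "y ! j" using h by (metis \<sigma>_def transpose_involutory)
        qed
      next
        assume h: "\<forall>j<L. y ! j"
        show "\<forall>j<L. y ! \<sigma> j" using h a k by (auto simp: \<sigma>_def Transposition.transpose_def)
      qed
      then show ?thesis using L by (auto simp: ones_def)
    qed
    then show ?thesis using s by auto
  qed
  moreover have "(\<lambda>y. xor_bits y (delta n a k)) -` {y. ones y L} \<inter> set_pmf (V x) =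
      {y. y \<in> bitstrings n \<and> ones (xor_bits y (delta n a k)) L} \<inter> set_pmf (V x)"
    using s by auto
  ultimately show ?thesis using eq by (metis measure_Int_set_pmf)
qed

lemma fam_bound:
  assumes V: "unary_unbiased_op n V" and x: "x \<in> bitstrings n" and L: "L \<le> n"
    and a: "a < L" and K: "K \<subseteq> {..<L}" and xk: "\<And>k. k \<in> K \<Longrightarrow> x ! k \<noteq> x ! a"
  shows "real (card K + 1) * measure (V x) {y. ones y L} \<le> 1"
proof -
  define E where "E = (\<lambda>j. if j = a then {y. y \<in> bitstrings n \<and> ones y L}
     else {y. y \<in> bitstrings n \<and> ones (xor_bits y (delta n a j)) L})"
  have aK: "a \<notin> K" using xk by auto
  have fin: "finite K" using K finite_subset by blast
  have s: "set_pmf (V x) \<subseteq> bitstrings n" by (rule unb_set[OF V x])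
  have mE: "measure (V x) (E j) = measure (V x) {y. ones y L}" if "j \<in> insert a K" for j
  proof (cases "j = a")
    case True
    have "{y. y \<in> bitstrings n \<and> ones y L} \<inter> set_pmf (V x) = {y. ones y L} \<inter> set_pmf (V x)"
      using s by auto
    then have "measure (V x) ({y. y \<in> bitstrings n \<and> ones y L} \<inter> set_pmf (V x)) =
        measure (V x) ({y. ones y L} \<inter> set_pmf (V x))" by simp
    then show ?thesis using True unfolding E_def by (simp add: measure_Int_set_pmf)
  next
    case False
    then have "j \<in> K" using that by auto
    then show ?thesis using False fam_eq[OF V x L a _ xk[of j]] K unfolding E_def by auto
  qed
  have Ea: "y \<in> E a \<Longrightarrow> y ! a" for y using a unfolding E_def ones_def by simp
  have Ej: "y ! l = (l \<noteq> a \<and> l \<noteq> j)" if "y \<in> E j" "j \<noteq> a" "l < L" for y j l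
  proof -
    have yb: "y \<in> bitstrings n" and o: "ones (xor_bits y (delta n a j)) L"
      using that(1,2) unfolding E_def by auto
    have ln: "l < n" using that(3) L by simp
    have "xor_bits y (delta n a j) ! l" using o that(3) unfolding ones_def by simp
    then show ?thesis using yb ln by (simp add: bitstrings_def delta_def)
  qed
  have disj: "disjoint_family_on E (insert a K)"
  proof (unfold disjoint_family_on_def, intro ballI impI)
    fix i j assume i: "i \<in> insert a K" and j: "j \<in> insert a K" and ij: "i \<noteq> j"
    show "E i \<inter> E j = {}"
    proof (rule ccontr)
      assume "E i \<inter> E j \<noteq> {}"
      then obtain y where yi: "y \<in> E i" and yj: "y \<in> E j" by blast
      consider "i = a" "j \<in> K" | "j = a" "i \<in> K" | "i \<in> K" "j \<in> K"
        using i j ij by blast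
      then show False
      proof cases
        case 1
        then have "j \<noteq> a" using aK by blast
        have ya: "y \<in> E a" using yi 1 by simp
        have "y ! a" by (rule Ea[OF ya])
        moreover have "\<not> y ! a" using Ej[OF yj \<open>j \<noteq> a\<close> a] by simp
        ultimately show False by simp
      next
        case 2
        then have "i \<noteq> a" using aK by blast
        have ya: "y \<in> E a" using yj 2 by simp
        have "y ! a" by (rule Ea[OF ya])
        moreover have "\<not> y ! a" using Ej[OF yi \<open>i \<noteq> a\<close> a] by simp
        ultimately show False by simp
      next
        case 3
        then have na: "i \<noteq> a" "j \<noteq> a" using aK by blast+
        have iL: "i < L" using 3 K by blast
        show False using Ej[OF yi na(1) iL] Ej[OF yj na(2) iL] ij na by simp
      qed
    qed
  qed
  have "measure (V x) (\<Union>j\<in>insert a K. E j) = (\<Sum>j\<in>insert a K. measure (V x) (E j))"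
    using fin disj by (intro measure_pmf.finite_measure_finite_Union) auto
  also have "\<dots> = (\<Sum>j\<in>insert a K. measure (V x) {y. ones y L})" using mE by simp
  also have "\<dots> = real (card K + 1) * measure (V x) {y. ones y L}" using fin aK by simp
  finally show ?thesis using measure_pmf.prob_le_1[of "V x" "\<Union>j\<in>insert a K. E j"] by simp
qed

lemma mask_bound:
  assumes V: "unary_unbiased_op n V" and x: "x \<in> bitstrings n" and L: "L \<le> n"
    and p: "p < L" "\<not> x ! p" and q: "q < L" "x ! q"
  shows "measure (V x) {y. ones y L} \<le> 2 / (real L + 2)"
proof -
  define Os where "Os = {k. k < L \<and> x ! k}"
  define Z where "Z = {k. k < L \<and> \<not> x ! k}"
  have c: "card Os + card Z = L"
  proof -
    have "Os \<union> Z = {..<L}" "Os \<inter> Z = {}" unfolding Os_def Z_def by auto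
    then have "card Os + card Z = card {..<L}"
      by (metis card_Un_disjoint finite_Un finite_lessThan)
    then show ?thesis by simp
  qed
  have b1: "real (card Os + 1) * measure (V x) {y. ones y L} \<le> 1"
    using p by (intro fam_bound[OF V x L p(1)]) (auto simp: Os_def)
  have b2: "real (card Z + 1) * measure (V x) {y. ones y L} \<le> 1"
    using q by (intro fam_bound[OF V x L q(1)]) (auto simp: Z_def)
  define P where "P = measure (V x) {y. ones y L}"
  have "real L * P = real (card Os) * P + real (card Z) * P"
    using c by (metis distrib_right of_nat_add)
  then have "(real L + 2) * measure (V x) {y. ones y L} \<le> 2"
    using b1 b2 unfolding P_def[symmetric] by (simp add: algebra_simps)
  then show ?thesis by (simp add: field_simps)
qed



lemma count_fix:
  "I \<subseteq> {..<n} \<Longrightarrow> card {w \<in> bitstrings n. \<forall>k\<in>I. w ! k = c k} = 2 ^ (n - card I)"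
proof (induction n arbitrary: I c)
  case 0
  then have "I = {}" by auto
  moreover have "{w \<in> bitstrings 0. True} = {[]}" by (auto simp: bitstrings_def)
  ultimately show ?case by simp
next
  case (Suc n)
  define I' where "I' = {k. Suc k \<in> I}"
  define c' where "c' = (\<lambda>k. c (Suc k))"
  define Bs where "Bs = {b. 0 \<in> I \<longrightarrow> b = c 0}"
  define S' where "S' = {w \<in> bitstrings n. \<forall>k\<in>I'. w ! k = c' k}"
  have I': "I' \<subseteq> {..<n}" using Suc.prems unfolding I'_def by auto
  have cS': "card S' = 2 ^ (n - card I')" unfolding S'_def by (rule Suc.IH[OF I'])
  have seteq: "{w \<in> bitstrings (Suc n). \<forall>k\<in>I. w ! k = c k} = (\<lambda>(b, w). b # w) ` (Bs \<times> S')"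
  proof (intro equalityI subsetI)
    fix w assume w: "w \<in> {w \<in> bitstrings (Suc n). \<forall>k\<in>I. w ! k = c k}"
    then obtain b w' where bw: "w = b # w'" by (cases w) (auto simp: bitstrings_def)
    have "w' \<in> bitstrings n" using w bw by (auto simp: bitstrings_def)
    moreover have "\<forall>k\<in>I'. w' ! k = c' k"
    proof
      fix k assume "k \<in> I'"
      then have "Suc k \<in> I" unfolding I'_def by simp
      then have "w ! Suc k = c (Suc k)" using w by blast
      then show "w' ! k = c' k" using bw unfolding c'_def by simp
    qed
    moreover have "b \<in> Bs"
    proof -
      have "0 \<in> I \<longrightarrow> w ! 0 = c 0" using w by blast
      then show ?thesis using bw unfolding Bs_def by simp
    qed
    ultimately show "w \<in> (\<lambda>(b, w). b # w) ` (Bs \<times> S')" using bw unfolding S'_def by auto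
  next
    fix w assume "w \<in> (\<lambda>(b, w). b # w) ` (Bs \<times> S')"
    then obtain b w' where bw: "w = b # w'" and b: "b \<in> Bs" and w': "w' \<in> S'" by auto
    have "\<forall>k\<in>I. w ! k = c k"
    proof
      fix k assume k: "k \<in> I"
      show "w ! k = c k"
      proof (cases k)
        case 0 then show ?thesis using b k bw unfolding Bs_def by auto
      next
        case (Suc k') then show ?thesis using w' k bw unfolding S'_def I'_def c'_def by auto
      qed
    qed
    then show "w \<in> {w \<in> bitstrings (Suc n). \<forall>k\<in>I. w ! k = c k}"
      using bw w' unfolding S'_def by (auto simp: bitstrings_def)
  qed
  have inj: "inj_on (\<lambda>(b, w). b # w) (Bs \<times> S')" by (auto intro: inj_onI)
  have finS': "finite S'" unfolding S'_def using finite_bitstrings by auto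
  have cB: "card Bs = (if 0 \<in> I then 1 else 2)"
  proof (cases "0 \<in> I")
    case True
    then have "Bs = {c 0}" unfolding Bs_def by auto
    then show ?thesis using True by simp
  next
    case False
    then have "Bs = UNIV" unfolding Bs_def by auto
    then show ?thesis using False by simp
  qed
  have Ieq: "I = Suc ` I' \<union> (I \<inter> {0})"
  proof (intro equalityI subsetI)
    fix k assume k: "k \<in> I"
    show "k \<in> Suc ` I' \<union> (I \<inter> {0})"
    proof (cases k)
      case 0 then show ?thesis using k by simp
    next
      case (Suc k') then have "k' \<in> I'" using k unfolding I'_def by simp
      then show ?thesis using Suc by blast
    qed
  next
    fix k assume "k \<in> Suc ` I' \<union> (I \<inter> {0})"
    then show "k \<in> I" unfolding I'_def by auto
  qed
  have finI': "finite I'" using I' finite_subset by blast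
  have cI: "card I = card I' + (if 0 \<in> I then 1 else 0)"
  proof -
    have "card I = card (Suc ` I') + card (I \<inter> {0})"
      by (subst Ieq, rule card_Un_disjoint) (use finI' in auto)
    also have "card (Suc ` I') = card I'" by (simp add: card_image)
    finally show ?thesis by (cases "0 \<in> I") auto
  qed
  have cI'n: "card I' \<le> n" using card_mono[OF _ I'] by simp
  have "card {w \<in> bitstrings (Suc n). \<forall>k\<in>I. w ! k = c k} = card Bs * card S'"
    unfolding seteq by (simp add: card_image[OF inj] card_cartesian_product)
  also have "\<dots> = 2 ^ (Suc n - card I)"
    unfolding cB cS' cI using cI'n by (auto simp: Suc_diff_le)
  finally show ?case .
qed

definition hi :: "nat \<Rightarrow> nat \<Rightarrow> bool list \<Rightarrow> bool list" where
  "hi n L w = map (\<lambda>i. w ! i \<and> L \<le> i) [0..<n]"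

lemma hi_bits: "hi n L w \<in> bitstrings n" by (simp add: hi_def bitstrings_def)

lemma hi_nth: "i < n \<Longrightarrow> hi n L w ! i = (w ! i \<and> L \<le> i)" by (simp add: hi_def)

lemma count_ones:
  assumes y: "y \<in> bitstrings n" and Ls: "L \<le> s" and sn: "s \<le> n"
  shows "card {w \<in> bitstrings n. ones (xor_bits y (hi n L w)) s} = (if ones y L then 2 ^ (n - (s - L)) else 0)"
proof -
  have nth: "xor_bits y (hi n L w) ! k = (y ! k \<noteq> (w ! k \<and> L \<le> k))" if "k < n" for w k
    using that y by (simp add: bitstrings_def hi_def)
  have eq: "{w \<in> bitstrings n. ones (xor_bits y (hi n L w)) s} =
     (if ones y L then {w \<in> bitstrings n. \<forall>k\<in>{L..<s}. w ! k = (\<not> y ! k)} else {})"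
  proof (cases "ones y L")
    case True
    have "ones (xor_bits y (hi n L w)) s = (\<forall>k\<in>{L..<s}. w ! k = (\<not> y ! k))" for w
    proof
      assume h: "ones (xor_bits y (hi n L w)) s"
      show "\<forall>k\<in>{L..<s}. w ! k = (\<not> y ! k)"
      proof
        fix k assume k: "k \<in> {L..<s}"
        then have "xor_bits y (hi n L w) ! k" using h unfolding ones_def by auto
        then show "w ! k = (\<not> y ! k)" using nth[of k w] k sn by auto
      qed
    next
      assume h: "\<forall>k\<in>{L..<s}. w ! k = (\<not> y ! k)"
      show "ones (xor_bits y (hi n L w)) s" unfolding ones_def
      proof (intro allI impI)
        fix k assume k: "k < s"
        show "xor_bits y (hi n L w) ! k"
        proof (cases "k < L")
          case True then show ?thesis using \<open>ones y L\<close> nth[of k w] k sn unfolding ones_def by auto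
        next
          case False then show ?thesis using h nth[of k w] k sn by auto
        qed
      qed
    qed
    then show ?thesis using True by auto
  next
    case False
    then obtain k where k: "k < L" "\<not> y ! k" unfolding ones_def by auto
    have ks: "k < s" "k < n" using k Ls sn by auto
    have "\<not> ones (xor_bits y (hi n L w)) s" for w
    proof -
      have "\<not> xor_bits y (hi n L w) ! k" using nth[OF ks(2), of w] k by simp
      then show ?thesis using ks unfolding ones_def by blast
    qed
    then show ?thesis using False by auto
  qed
  have "{L..<s} \<subseteq> {..<n}" using sn by auto
  then show ?thesis unfolding eq using count_fix[of "{L..<s}" n "\<lambda>k. \<not> y ! k"] by auto
qed

lemma count_zeros:
  assumes y: "y \<in> bitstrings n" and Ls: "L \<le> s" and sn: "s \<le> n"
  shows "card {w \<in> bitstrings n. zeros (xor_bits y (hi n L w)) s} = (if zeros y L then 2 ^ (n - (s - L)) else 0)"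
proof -
  have nth: "xor_bits y (hi n L w) ! k = (y ! k \<noteq> (w ! k \<and> L \<le> k))" if "k < n" for w k
    using that y by (simp add: bitstrings_def hi_def)
  have eq: "{w \<in> bitstrings n. zeros (xor_bits y (hi n L w)) s} =
     (if zeros y L then {w \<in> bitstrings n. \<forall>k\<in>{L..<s}. w ! k = y ! k} else {})"
  proof (cases "zeros y L")
    case True
    have "zeros (xor_bits y (hi n L w)) s = (\<forall>k\<in>{L..<s}. w ! k = y ! k)" for w
    proof
      assume h: "zeros (xor_bits y (hi n L w)) s"
      show "\<forall>k\<in>{L..<s}. w ! k = y ! k"
      proof
        fix k assume k: "k \<in> {L..<s}"
        then have "\<not> xor_bits y (hi n L w) ! k" using h unfolding zeros_def by auto
        then show "w ! k = y ! k" using nth[of k w] k sn by auto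
      qed
    next
      assume h: "\<forall>k\<in>{L..<s}. w ! k = y ! k"
      show "zeros (xor_bits y (hi n L w)) s" unfolding zeros_def
      proof (intro allI impI)
        fix k assume k: "k < s"
        show "\<not> xor_bits y (hi n L w) ! k"
        proof (cases "k < L")
          case True then show ?thesis using \<open>zeros y L\<close> nth[of k w] k sn unfolding zeros_def by auto
        next
          case False then show ?thesis using h nth[of k w] k sn by auto
        qed
      qed
    qed
    then show ?thesis using True by auto
  next
    case False
    then obtain k where k: "k < L" "y ! k" unfolding zeros_def by auto
    have ks: "k < s" "k < n" using k Ls sn by auto
    have "\<not> zeros (xor_bits y (hi n L w)) s" for w
    proof -
      have "xor_bits y (hi n L w) ! k" using nth[OF ks(2), of w] k by simp
      then show ?thesis using ks unfolding zeros_def by blast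
    qed
    then show ?thesis using False by auto
  qed
  have "{L..<s} \<subseteq> {..<n}" using sn by auto
  then show ?thesis unfolding eq using count_fix[of "{L..<s}" n "\<lambda>k. y ! k"] by auto
qed



lemma tele:
  fixes M h :: nat
  shows "\<phi> \<le> h \<Longrightarrow> (max M \<phi>)^2 \<le> M^2 + (\<Sum>i\<in>{M<..h}. if i \<le> \<phi> then 2*i else 0)"
proof (induction h arbitrary: \<phi>)
  case 0
  then show ?case by simp
next
  case (Suc h)
  show ?case
  proof (cases "\<phi> \<le> h")
    case True
    have "(\<Sum>i\<in>{M<..h}. if i \<le> \<phi> then 2*i else 0) \<le> (\<Sum>i\<in>{M<..Suc h}. if i \<le> \<phi> then 2*i else (0::nat))"
      by (intro sum_mono2) auto
    then show ?thesis using Suc.IH[OF True] by linarith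
  next
    case False
    then have ph: "\<phi> = Suc h" using Suc.prems by simp
    show ?thesis
    proof (cases "M \<le> h")
      case False
      then show ?thesis using ph by simp
    next
      case True
      have ins: "{M<..Suc h} = insert (Suc h) {M<..h}" using True by auto
      have "(\<Sum>i\<in>{M<..Suc h}. if i \<le> \<phi> then 2*i else 0) =
          2 * Suc h + (\<Sum>i\<in>{M<..h}. if i \<le> \<phi> then 2*i else (0::nat))"
        unfolding ins using ph by simp
      also have "(\<Sum>i\<in>{M<..h}. if i \<le> \<phi> then 2*i else (0::nat)) = (\<Sum>i\<in>{M<..h}. if i \<le> h then 2*i else 0)"
        using ph by (intro sum.cong) auto
      finally have e: "(\<Sum>i\<in>{M<..Suc h}. if i \<le> \<phi> then 2*i else 0) =
          2 * Suc h + (\<Sum>i\<in>{M<..h}. if i \<le> h then 2*i else 0)" .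
      have "(max M h)^2 \<le> M^2 + (\<Sum>i\<in>{M<..h}. if i \<le> h then 2*i else 0)" using Suc.IH[of h] by simp
      moreover have "max M h = h" "max M \<phi> = Suc h" using True ph by auto
      ultimately show ?thesis unfolding e by (simp add: power2_eq_square)
    qed
  qed
qed

lemma geo:
  "(\<Sum>i\<in>{M<..M+k}. (1/2::real)^(i-M-1)) = 2 - 2 * (1/2)^k"
proof (induction k)
  case 0 then show ?case by simp
next
  case (Suc k)
  have "{M<..M + Suc k} = insert (M + Suc k) {M<..M+k}" by auto
  then have "(\<Sum>i\<in>{M<..M+Suc k}. (1/2::real)^(i-M-1)) = (1/2)^k + (\<Sum>i\<in>{M<..M+k}. (1/2::real)^(i-M-1))"
    by simp
  then show ?case using Suc.IH by simp
qed

lemma geo_le: "(\<Sum>i\<in>{M<..h}. (1/2::real)^(i-M-1)) \<le> 2"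
proof (cases "h \<le> M")
  case True then show ?thesis by simp
next
  case False
  then obtain k where "h = M + k" by (metis le_add_diff_inverse nat_le_linear)
  then show ?thesis using geo[of M k] by simp
qed

lemma stepK: "(\<Sum>i\<in>{M<..h}. 2 * real i * 2^(2*M+2) / 4^i) \<le> 4 * (real M + 1)"
proof -
  have t: "2 * real i * 2^(2*M+2) / 4^i \<le> 2 * (real M + 1) * (1/2)^(i-M-1)" if i: "i \<in> {M<..h}" for i
  proof -
    have "M < i" using i by simp
    then obtain j where ij: "i = M + 1 + j" using less_imp_add_positive by (metis add.assoc add.commute less_iff_Suc_add plus_1_eq_Suc)
    have j2: "real j + 1 \<le> 2^j"
    proof -
      have "Suc j \<le> 2^j" by (rule Suc_leI) (rule less_exp)
      then have "real (Suc j) \<le> real (2^j)" by (simp only: of_nat_le_iff)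
      then show ?thesis by simp
    qed
    have "real M + 1 + real j \<le> (real M + 1) * (real j + 1)" by (simp add: algebra_simps)
    also have "\<dots> \<le> (real M + 1) * 2^j" using j2 by (intro mult_left_mono) auto
    finally have a: "real M + 1 + real j \<le> (real M + 1) * 2^j" .
    have p4a: "(4::real)^(M+1) = 2^(2*M+2)"
    proof -
      have "(4::real)^(M+1) = (2^2)^(M+1)" by simp
      also have "\<dots> = 2^(2*(M+1))" by (simp only: power_mult)
      finally show ?thesis by simp
    qed
    have p4: "(4::real)^i = 2^(2*M+2) * 4^j" unfolding ij p4a[symmetric]
      by (simp only: power_add)
    have p2: "(4::real)^j = 2^j * 2^j" by (simp add: power_mult_distrib[symmetric])
    have X: "(2::real)^(2*M+2) > 0" by simp
    have "2 * real i * 2^(2*M+2) / 4^i = 2 * real i / 4^j" unfolding p4 using X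
      by (simp add: field_simps)
    also have "\<dots> = 2 * (real M + 1 + real j) / 4^j" using ij by simp
    also have "\<dots> \<le> 2 * ((real M + 1) * 2^j) / 4^j" using a by (intro divide_right_mono) auto
    also have "\<dots> = 2 * (real M + 1) * (1/2)^j" unfolding p2 by (simp add: power_one_over field_simps)
    also have "(1/2::real)^j = (1/2)^(i-M-1)" using ij by simp
    finally show ?thesis .
  qed
  have "(\<Sum>i\<in>{M<..h}. 2 * real i * 2^(2*M+2) / 4^i) \<le> (\<Sum>i\<in>{M<..h}. 2 * (real M + 1) * (1/2)^(i-M-1))"
    using t by (intro sum_mono) auto
  also have "\<dots> = 2 * (real M + 1) * (\<Sum>i\<in>{M<..h}. (1/2)^(i-M-1))" by (simp add: sum_distrib_left)
  also have "\<dots> \<le> 2 * (real M + 1) * 2" using geo_le[of M h] by (intro mult_left_mono) auto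
  finally show ?thesis by simp
qed

lemma baseK: "(\<Sum>i\<in>{0<..h}. 2 * real i * 2^0 / 4^i) \<le> 1"
proof -
  have t: "2 * real i * 2^0 / 4^i \<le> (1/2) * (1/2)^(i-0-1)" if i: "i \<in> {0<..h}" for i
  proof -
    have "0 < i" using i by simp
    then obtain j where ij: "i = Suc j" using gr0_implies_Suc by blast
    have "Suc j \<le> 2^j" by (rule Suc_leI) (rule less_exp)
    then have "real (Suc j) \<le> real (2^j)" by (simp only: of_nat_le_iff)
    then have "real j + 1 \<le> 2^j" by simp
    then have a: "2 * real i \<le> 2^i" unfolding ij by simp
    have "2 * real i * 2^0 / 4^i \<le> 2^i / 4^i" using a by (intro divide_right_mono) auto
    also have "(2::real)^i / 4^i = (1/2)^i" by (simp add: power_divide[symmetric])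
    also have "(1/2::real)^i = (1/2) * (1/2)^(i-0-1)" using ij by simp
    finally show ?thesis .
  qed
  have "(\<Sum>i\<in>{0<..h}. 2 * real i * 2^0 / 4^i) \<le> (\<Sum>i\<in>{0<..h}. (1/2) * (1/2::real)^(i-0-1))"
    using t by (intro sum_mono) auto
  also have "\<dots> = (1/2) * (\<Sum>i\<in>{0<..h}. (1/2::real)^(i-0-1))" by (simp add: sum_distrib_left)
  also have "\<dots> \<le> (1/2) * 2" using geo_le[of 0 h] by (intro mult_left_mono) auto
  finally show ?thesis by simp
qed



lemma pow_split:
  assumes "L \<le> 2*i" "2*i \<le> n"
  shows "(2::real)^(n - (2*i - L)) = 2^n * 2^L / 4^i"
proof -
  have a: "(2::real)^(n - (2*i - L)) * 2^(2*i - L) = 2^n"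
    using assms by (simp add: power_add[symmetric])
  have b: "(2::real)^(2*i - L) * 2^L = 4^i"
  proof -
    have "(2::real)^(2*i - L) * 2^L = 2^(2*i)" using assms by (simp add: power_add[symmetric])
    also have "\<dots> = (2^2)^i" by (simp only: power_mult)
    finally show ?thesis by simp
  qed
  have "(2::real)^(n - (2*i - L)) = 2^(n - (2*i - L)) * 2^(2*i - L) * 2^L / 4^i"
    using b by (simp add: field_simps)
  then show ?thesis using a by simp
qed

lemma pw:
  assumes y: "y \<in> bitstrings n" and L: "L \<le> 2*M+2"
  shows "(\<Sum>w\<in>bitstrings n. real ((max M (phi n (xor_bits y (hi n L w))))^2)) \<le>
     2^n * real (M^2) + 2^n * ((if ones y L then 1 else 0) + (if zeros y L then 1 else 0)) *
        (\<Sum>i\<in>{M<..n div 2}. 2 * real i * 2^L / 4^i)"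
proof -
  define B where "B = bitstrings n"
  define h where "h = n div 2"
  define \<phi> where "\<phi> = (\<lambda>w. phi n (xor_bits y (hi n L w)))"
  define ind where "ind = (if ones y L then 1 else 0) + (if zeros y L then (1::real) else 0)"
  have finB: "finite B" unfolding B_def by (rule finite_bitstrings)
  have cB: "real (card B) = 2^n" unfolding B_def by (simp add: card_bitstrings)
  have S1: "real ((max M (\<phi> w))^2) \<le> real (M^2) + (\<Sum>i\<in>{M<..h}. if i \<le> \<phi> w then 2 * real i else 0)" for w
  proof -
    have "(max M (\<phi> w))^2 \<le> M^2 + (\<Sum>i\<in>{M<..h}. if i \<le> \<phi> w then 2*i else 0)"
      unfolding h_def \<phi>_def by (rule tele[OF phi_le])
    then have "real ((max M (\<phi> w))^2) \<le> real (M^2 + (\<Sum>i\<in>{M<..h}. if i \<le> \<phi> w then 2*i else 0))"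
      by (simp only: of_nat_le_iff)
    moreover have e: "real (\<Sum>i\<in>{M<..h}. if i \<le> \<phi> w then 2*i else 0) = (\<Sum>i\<in>{M<..h}. if i \<le> \<phi> w then 2*real i else 0)"
      unfolding of_nat_sum by (intro sum.cong refl) simp
    ultimately show ?thesis by (simp only: of_nat_add)
  qed
  have "(\<Sum>w\<in>B. real ((max M (\<phi> w))^2)) \<le>
      (\<Sum>w\<in>B. real (M^2) + (\<Sum>i\<in>{M<..h}. if i \<le> \<phi> w then 2 * real i else 0))"
    using S1 by (intro sum_mono) auto
  also have "\<dots> = real (card B) * real (M^2) + (\<Sum>i\<in>{M<..h}. \<Sum>w\<in>B. if i \<le> \<phi> w then 2 * real i else 0)"
    by (simp add: sum.distrib sum.swap[of _ B])
  also have "\<dots> \<le> real (card B) * real (M^2) + (\<Sum>i\<in>{M<..h}. 2 * real i * (ind * (2^n * 2^L / 4^i)))"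
  proof (intro add_left_mono sum_mono)
    fix i assume i: "i \<in> {M<..h}"
    have Li: "L \<le> 2*i" using i L by auto
    have in_: "2*i \<le> n" using i unfolding h_def by auto
    have se: "(\<Sum>w\<in>B. if i \<le> \<phi> w then 2 * real i else 0) = 2 * real i * real (card {w\<in>B. i \<le> \<phi> w})"
    proof -
      have "(\<Sum>w\<in>B. if i \<le> \<phi> w then 2 * real i else 0) = (\<Sum>w\<in>{w\<in>B. i \<le> \<phi> w}. 2 * real i)"
        by (rule sum.inter_filter[OF finB, symmetric])
      then show ?thesis by simp
    qed
    define X where "X = (2::nat) ^ (n - (2*i - L))"
    have "card {w\<in>B. i \<le> \<phi> w} \<le> card ({w\<in>B. ones (xor_bits y (hi n L w)) (2*i)} \<union> {w\<in>B. zeros (xor_bits y (hi n L w)) (2*i)})"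
      using finB by (intro card_mono) (auto simp: \<phi>_def phi_ge_iff)
    also have "\<dots> \<le> card {w\<in>B. ones (xor_bits y (hi n L w)) (2*i)} + card {w\<in>B. zeros (xor_bits y (hi n L w)) (2*i)}"
      by (rule card_Un_le)
    also have "\<dots> = (if ones y L then X else 0) + (if zeros y L then X else 0)"
      unfolding B_def X_def using count_ones[OF y Li in_] count_zeros[OF y Li in_] by simp
    finally have cn: "card {w\<in>B. i \<le> \<phi> w} \<le> (if ones y L then X else 0) + (if zeros y L then X else 0)" .
    then have "real (card {w\<in>B. i \<le> \<phi> w}) \<le> real ((if ones y L then X else 0) + (if zeros y L then X else 0))"
      by (simp only: of_nat_le_iff)
    also have "\<dots> = ind * real X" unfolding ind_def by (simp add: algebra_simps)
    also have "real X = 2^n * 2^L / 4^i" unfolding X_def using pow_split[OF Li in_] by simp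
    finally have c: "real (card {w\<in>B. i \<le> \<phi> w}) \<le> ind * (2^n * 2^L / 4^i)" .
    show "(\<Sum>w\<in>B. if i \<le> \<phi> w then 2 * real i else 0) \<le> 2 * real i * (ind * (2^n * 2^L / 4^i))"
      unfolding se using c by (intro mult_left_mono) auto
  qed
  also have "(\<Sum>i\<in>{M<..h}. 2 * real i * (ind * (2^n * 2^L / 4^i))) = 2^n * ind * (\<Sum>i\<in>{M<..h}. 2 * real i * 2^L / 4^i)"
    by (simp add: sum_distrib_left algebra_simps)
  finally show ?thesis using cB unfolding B_def h_def \<phi>_def ind_def by simp
qed



lemma mask_zeros:
  assumes V: "unary_unbiased_op n V" and x: "x \<in> bitstrings n" and L: "L \<le> n"
    and p: "p < L" "\<not> x ! p" and q: "q < L" "x ! q"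
  shows "measure (V x) {y. zeros y L} \<le> 2 / (real L + 2)"
proof -
  define one where "one = replicate n True"
  have ob: "one \<in> bitstrings n" by (simp add: one_def bitstrings_def)
  define x' where "x' = xor_bits x one"
  have x': "x' \<in> bitstrings n" unfolding x'_def by (rule xor_in_bitstrings[OF x ob])
  have nx: "x' ! k = (\<not> x ! k)" if "k < n" for k using that x by (simp add: x'_def one_def bitstrings_def)
  have b: "measure (V x') {y. ones y L} \<le> 2 / (real L + 2)"
    using mask_bound[OF V x' L q(1) _ p(1)] nx p q L by simp
  have "measure (V x') {y. ones y L} = measure (V x) ((\<lambda>y. xor_bits y one) -` {y. ones y L})"
    unfolding x'_def V_xor_map[OF V x ob] by simp
  also have "\<dots> = measure (V x) ((\<lambda>y. xor_bits y one) -` {y. ones y L} \<inter> set_pmf (V x))"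
    by (simp add: measure_Int_set_pmf)
  also have "(\<lambda>y. xor_bits y one) -` {y. ones y L} \<inter> set_pmf (V x) = {y. zeros y L} \<inter> set_pmf (V x)"
  proof -
    have "ones (xor_bits y one) L = zeros y L" if "y \<in> bitstrings n" for y
      using that L by (auto simp: ones_def zeros_def one_def bitstrings_def)
    then show ?thesis using unb_set[OF V x] by auto
  qed
  also have "measure (V x) \<dots> = measure (V x) {y. zeros y L}" by (simp add: measure_Int_set_pmf)
  finally show ?thesis using b by simp
qed

definition tau :: "nat \<Rightarrow> bool list \<Rightarrow> bool list list \<Rightarrow> bool list list" where
  "tau n w xs = Tu (hi n (2 * Phi n xs + 2) w) xs"

lemma tau_props:
  assumes xs: "set xs \<subseteq> bitstrings n"
  shows "Phi n (tau n w xs) = Phi n xs" "map (dlb n) (tau n w xs) = map (dlb n) xs"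
        "set (tau n w xs) \<subseteq> bitstrings n" "tau n w (tau n w xs) = xs" "length (tau n w xs) = length xs"
proof -
  define u where "u = hi n (2 * Phi n xs + 2) w"
  have u: "u \<in> bitstrings n" unfolding u_def by (rule hi_bits)
  have uz: "\<not> u ! i" if "i < n" "i < 2 * Phi n xs + 2" for i using that by (simp add: hi_nth u_def)
  note TP = Tu_props[OF xs u uz]
  have td: "tau n w xs = Tu u xs" unfolding tau_def u_def ..
  show 1: "Phi n (tau n w xs) = Phi n xs" unfolding td by (rule TP(1))
  show "map (dlb n) (tau n w xs) = map (dlb n) xs" unfolding td by (rule TP(2))
  show "set (tau n w xs) \<subseteq> bitstrings n" unfolding td by (rule TP(3))
  have "tau n w (tau n w xs) = Tu (hi n (2 * Phi n (tau n w xs) + 2) w) (tau n w xs)" by (rule tau_def)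
  also have "\<dots> = Tu (hi n (2 * Phi n xs + 2) w) (tau n w xs)" by (simp only: 1)
  also have "\<dots> = Tu u (Tu u xs)" by (simp only: td u_def)
  finally show "tau n w (tau n w xs) = xs" using TP(4) by simp
  show "length (tau n w xs) = length xs" by (simp add: td Tu_def)
qed

lemma map_tau:
  assumes alg: "unary_unbiased_alg n A"
  shows "map_pmf (tau n w) (history n (dlb n) A t) = history n (dlb n) A t"
proof (rule pmf_eqI)
  fix ys
  define D where "D = {xs. length xs = Suc t \<and> set xs \<subseteq> bitstrings n}"
  have sup: "set_pmf (history n (dlb n) A t) \<subseteq> D" using set_pmf_history[OF alg] unfolding D_def by blast
  have fD: "tau n w xs \<in> D" if "xs \<in> D" for xs using that tau_props[of xs n w] unfolding D_def by auto
  have ff: "tau n w (tau n w xs) = xs" if "xs \<in> D" for xs using that tau_props[of xs n w] unfolding D_def by auto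
  have r: "pmf (map_pmf (tau n w) (history n (dlb n) A t)) ys =
      (if ys \<in> D then pmf (history n (dlb n) A t) (tau n w ys) else 0)"
    by (rule pmf_map_invol[OF sup fD ff])
  show "pmf (map_pmf (tau n w) (history n (dlb n) A t)) ys = pmf (history n (dlb n) A t) ys"
  proof (cases "ys \<in> D")
    case True
    define u where "u = hi n (2 * Phi n ys + 2) w"
    have u: "u \<in> bitstrings n" unfolding u_def by (rule hi_bits)
    have uz: "\<not> u ! i" if "i < n" "i < 2 * Phi n ys + 2" for i using that by (simp add: hi_nth u_def)
    have "pmf (history n (dlb n) A t) (Tu u ys) = pmf (history n (dlb n) A t) ys"
      using hist_inv[OF alg _ _ u uz] True unfolding D_def by blast
    then show ?thesis using r True unfolding tau_def u_def by simp
  next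
    case False
    then have "ys \<notin> set_pmf (history n (dlb n) A t)" using sup by blast
    then show ?thesis using r False by (simp add: set_pmf_iff)
  qed
qed



definition Kc :: "nat \<Rightarrow> nat \<Rightarrow> real" where
  "Kc n M = (\<Sum>i\<in>{M<..n div 2}. 2 * real i * 2^(2*M+2) / 4^i)"

lemma Kc_nonneg: "0 \<le> Kc n M" unfolding Kc_def by (intro sum_nonneg) auto

lemma KP_bound:
  assumes V: "unary_unbiased_op n V" and x: "x \<in> bitstrings n" and px: "phi n x \<le> M" and Mh: "M \<le> n div 2"
  shows "Kc n M * measure (V x) {y. ones y (2*M+2)} + Kc n M * measure (V x) {y. zeros y (2*M+2)} \<le> 8"
proof (cases "M < n div 2")
  case False
  then have "M = n div 2" using Mh by simp
  then have "Kc n M = 0" unfolding Kc_def by simp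
  then show ?thesis by simp
next
  case True
  define L where "L = 2*M+2"
  have "\<not> (M + 1 \<le> phi n x)" using px by simp
  then have no: "\<not> ones x L" "\<not> zeros x L" using True phi_ge_iff[of "M+1" n x] unfolding L_def by auto
  obtain p where p: "p < L" "\<not> x ! p" using no(1) unfolding ones_def by auto
  obtain q where q: "q < L" "x ! q" using no(2) unfolding zeros_def by auto
  have Ln: "L \<le> n" unfolding L_def using True by linarith
  have P1: "measure (V x) {y. ones y L} \<le> 2 / (real L + 2)" by (rule mask_bound[OF V x Ln p q])
  have P2: "measure (V x) {y. zeros y L} \<le> 2 / (real L + 2)" by (rule mask_zeros[OF V x Ln p q])
  have K: "Kc n M \<le> 4 * (real M + 1)" unfolding Kc_def by (rule stepK)
  have "Kc n M * measure (V x) {y. ones y L} + Kc n M * measure (V x) {y. zeros y L}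
     = Kc n M * (measure (V x) {y. ones y L} + measure (V x) {y. zeros y L})" by (simp add: algebra_simps)
  also have "\<dots> \<le> (4 * (real M + 1)) * (4 / (real L + 2))"
    using P1 P2 K Kc_nonneg[of n M] by (intro mult_mono) auto
  also have "\<dots> = 8 * ((real M + 1) / (real M + 2))" unfolding L_def by (simp add: field_simps)
  also have "\<dots> \<le> 8 * 1" by (intro mult_left_mono) auto
  finally show ?thesis unfolding L_def by simp
qed

lemma inner_bound:
  assumes V: "unary_unbiased_op n V" and x: "x \<in> bitstrings n" and px: "phi n x \<le> M" and Mh: "M \<le> n div 2"
  shows "(\<integral>\<^sup>+ y. (\<Sum>w\<in>bitstrings n. ennreal (real ((max M (phi n (xor_bits y (hi n (2*M+2) w))))^2))) * ennreal (1/2^n)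
      \<partial>measure_pmf (V x)) \<le> ennreal (real (M^2)) + 8"
proof -
  define L where "L = 2*M+2"
  define S1 where "S1 = {y. ones y L}"
  define S2 where "S2 = {y. zeros y L}"
  define K where "K = Kc n M"
  have K0: "0 \<le> K" unfolding K_def by (rule Kc_nonneg)
  have pt: "(\<Sum>w\<in>bitstrings n. ennreal (real ((max M (phi n (xor_bits y (hi n L w))))^2))) * ennreal (1/2^n)
      \<le> ennreal (real (M^2)) + ennreal K * indicator S1 y + ennreal K * indicator S2 y"
    if "y \<in> set_pmf (V x)" for y
  proof -
    have yb: "y \<in> bitstrings n" using that unb_set[OF V x] by blast
    define s where "s = (\<Sum>w\<in>bitstrings n. real ((max M (phi n (xor_bits y (hi n L w))))^2))"
    define ind where "ind = (if ones y L then 1 else 0) + (if zeros y L then 1 else (0::real))"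
    have s0: "0 \<le> s" unfolding s_def by (intro sum_nonneg) auto
    have e1: "(\<Sum>w\<in>bitstrings n. ennreal (real ((max M (phi n (xor_bits y (hi n L w))))^2))) = ennreal s"
      unfolding s_def by (rule sum_ennreal) auto
    have pwb: "s \<le> 2^n * real (M^2) + 2^n * ind * K"
      using pw[OF yb, of L M] unfolding L_def K_def Kc_def s_def ind_def by simp
    have "s * (1/2^n) \<le> real (M^2) + ind * K"
    proof -
      have "s * (1/2^n) \<le> (2^n * real (M^2) + 2^n * ind * K) * (1/2^n)"
        using pwb by (intro mult_right_mono) auto
      also have "\<dots> = real (M^2) + ind * K" by (simp add: field_simps)
      finally show ?thesis .
    qed
    then have "ennreal (s * (1/2^n)) \<le> ennreal (real (M^2) + ind * K)"
      using ennreal_leI by blast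
    moreover have "ennreal (s * (1/2^n)) = ennreal s * ennreal (1/2^n)" using s0 by (rule ennreal_mult) simp
    moreover have "ennreal (real (M^2) + ind * K) = ennreal (real (M^2)) + ennreal K * indicator S1 y + ennreal K * indicator S2 y"
      using K0 unfolding ind_def S1_def S2_def
      by (auto simp: ennreal_plus[symmetric] split: split_indicator simp del: ennreal_plus)
    ultimately show ?thesis unfolding e1 by simp
  qed
  have "(\<integral>\<^sup>+ y. (\<Sum>w\<in>bitstrings n. ennreal (real ((max M (phi n (xor_bits y (hi n L w))))^2))) * ennreal (1/2^n)
      \<partial>measure_pmf (V x)) \<le> (\<integral>\<^sup>+ y. ennreal (real (M^2)) + ennreal K * indicator S1 y + ennreal K * indicator S2 y \<partial>measure_pmf (V x))"
    by (intro nn_integral_mono_AE AE_pmfI pt)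
  also have "\<dots> = ennreal (real (M^2)) + ennreal K * emeasure (V x) S1 + ennreal K * emeasure (V x) S2"
    by (simp add: nn_integral_add nn_integral_cmult_indicator measure_pmf.emeasure_space_1)
  also have "\<dots> = ennreal (real (M^2) + (K * measure (V x) S1 + K * measure (V x) S2))"
    using K0 by (simp add: measure_pmf.emeasure_eq_measure ennreal_mult[symmetric] ennreal_plus[symmetric] del: ennreal_plus)
  also have "\<dots> \<le> ennreal (real (M^2) + 8)"
    using KP_bound[OF V x px Mh] unfolding K_def S1_def S2_def L_def by (intro ennreal_leI) simp
  also have "\<dots> = ennreal (real (M^2)) + 8" by (subst ennreal_plus) auto
  finally show ?thesis unfolding L_def .
qed



definition Fn :: "nat \<Rightarrow> ub_algorithm \<Rightarrow> bool list list \<Rightarrow> ennreal" where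
  "Fn n A zs = (\<integral>\<^sup>+ Vi. \<integral>\<^sup>+ y. ennreal (real ((Phi n (zs @ [y]))^2)) \<partial>measure_pmf (fst Vi (zs ! snd Vi))
      \<partial>measure_pmf (A (map (dlb n) zs)))"

definition Gt :: "nat \<Rightarrow> ub_algorithm \<Rightarrow> nat \<Rightarrow> ennreal" where
  "Gt n A t = (\<integral>\<^sup>+ xs. ennreal (real ((Phi n xs)^2)) \<partial>measure_pmf (history n (dlb n) A t))"

lemma F_tau:
  assumes alg: "unary_unbiased_alg n A" and zs: "zs \<in> set_pmf (history n (dlb n) A t)"
  shows "Fn n A (tau n w zs) = (\<integral>\<^sup>+ Vi. \<integral>\<^sup>+ y.
      ennreal (real ((max (Phi n zs) (phi n (xor_bits y (hi n (2 * Phi n zs + 2) w))))^2))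
      \<partial>measure_pmf (fst Vi (zs ! snd Vi)) \<partial>measure_pmf (A (map (dlb n) zs)))"
proof -
  have zl: "length zs = Suc t" and zb: "set zs \<subseteq> bitstrings n" using set_pmf_history[OF alg zs] by auto
  note TP = tau_props[OF zb, of w]
  define u where "u = hi n (2 * Phi n zs + 2) w"
  have u: "u \<in> bitstrings n" unfolding u_def by (rule hi_bits)
  have "Fn n A (tau n w zs) = (\<integral>\<^sup>+ Vi. \<integral>\<^sup>+ y. ennreal (real ((Phi n (tau n w zs @ [y]))^2))
      \<partial>measure_pmf (fst Vi (tau n w zs ! snd Vi)) \<partial>measure_pmf (A (map (dlb n) zs)))"
    unfolding Fn_def TP(2) ..
  also have "\<dots> = (\<integral>\<^sup>+ Vi. \<integral>\<^sup>+ y.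
      ennreal (real ((max (Phi n zs) (phi n (xor_bits y u)))^2))
      \<partial>measure_pmf (fst Vi (zs ! snd Vi)) \<partial>measure_pmf (A (map (dlb n) zs)))"
  proof (intro nn_integral_cong_AE AE_pmfI)
    fix Vi assume Vi: "Vi \<in> set_pmf (A (map (dlb n) zs))"
    obtain V i where Vi': "Vi = (V, i)" by (cases Vi)
    have "map (dlb n) zs \<noteq> []" using zl by auto
    then have iV: "i < length zs \<and> unary_unbiased_op n V"
      using alg_D[OF alg, of "map (dlb n) zs" V i] Vi unfolding Vi' by simp
    have zi: "zs ! i \<in> bitstrings n" using iV zb by auto
    have ti: "tau n w zs ! i = xor_bits (zs ! i) u" using iV unfolding tau_def Tu_def u_def by simp
    have Vm: "V (tau n w zs ! i) = map_pmf (\<lambda>y. xor_bits y u) (V (zs ! i))"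
      unfolding ti using V_xor_map iV zi u by blast
    have Ph: "Phi n (tau n w zs @ [xor_bits y u]) = max (Phi n zs) (phi n (xor_bits y u))" for y
      by (simp add: Phi_snoc TP(1))
    show "(\<integral>\<^sup>+ y. ennreal (real ((Phi n (tau n w zs @ [y]))^2)) \<partial>measure_pmf (fst Vi (tau n w zs ! snd Vi))) =
        (\<integral>\<^sup>+ y. ennreal (real ((max (Phi n zs) (phi n (xor_bits y u)))^2)) \<partial>measure_pmf (fst Vi (zs ! snd Vi)))"
      unfolding Vi' fst_conv snd_conv Vm nn_integral_map_pmf Ph ..
  qed
  finally show ?thesis unfolding u_def .
qed

lemma pt_bound:
  assumes alg: "unary_unbiased_alg n A" and zs: "zs \<in> set_pmf (history n (dlb n) A t)"
  shows "(\<Sum>w\<in>bitstrings n. Fn n A (tau n w zs)) * ennreal (1/2^n) \<le> ennreal (real ((Phi n zs)^2)) + 8"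
proof -
  have zl: "length zs = Suc t" and zb: "set zs \<subseteq> bitstrings n" using set_pmf_history[OF alg zs] by auto
  define M where "M = Phi n zs"
  define R where "R = (\<lambda>w y. ennreal (real ((max M (phi n (xor_bits y (hi n (2 * M + 2) w))))^2)))"
  have "(\<Sum>w\<in>bitstrings n. Fn n A (tau n w zs)) =
     (\<Sum>w\<in>bitstrings n. \<integral>\<^sup>+ Vi. \<integral>\<^sup>+ y. R w y \<partial>measure_pmf (fst Vi (zs ! snd Vi)) \<partial>measure_pmf (A (map (dlb n) zs)))"
    unfolding R_def M_def using F_tau[OF alg zs] by simp
  also have "\<dots> = (\<integral>\<^sup>+ Vi. (\<Sum>w\<in>bitstrings n. \<integral>\<^sup>+ y. R w y \<partial>measure_pmf (fst Vi (zs ! snd Vi))) \<partial>measure_pmf (A (map (dlb n) zs)))"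
    by (rule nn_integral_sum[symmetric]) simp
  also have "\<dots> = (\<integral>\<^sup>+ Vi. (\<integral>\<^sup>+ y. (\<Sum>w\<in>bitstrings n. R w y) \<partial>measure_pmf (fst Vi (zs ! snd Vi))) \<partial>measure_pmf (A (map (dlb n) zs)))"
    by (intro nn_integral_cong nn_integral_sum[symmetric]) simp
  finally have e: "(\<Sum>w\<in>bitstrings n. Fn n A (tau n w zs)) * ennreal (1/2^n) =
     (\<integral>\<^sup>+ Vi. (\<integral>\<^sup>+ y. (\<Sum>w\<in>bitstrings n. R w y) \<partial>measure_pmf (fst Vi (zs ! snd Vi))) * ennreal (1/2^n) \<partial>measure_pmf (A (map (dlb n) zs)))"
    by (simp add: nn_integral_multc)
  also have "\<dots> = (\<integral>\<^sup>+ Vi. (\<integral>\<^sup>+ y. (\<Sum>w\<in>bitstrings n. R w y) * ennreal (1/2^n) \<partial>measure_pmf (fst Vi (zs ! snd Vi))) \<partial>measure_pmf (A (map (dlb n) zs)))"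
    by (intro nn_integral_cong nn_integral_multc[symmetric]) simp
  also have "\<dots> \<le> (\<integral>\<^sup>+ Vi. ennreal (real (M^2)) + 8 \<partial>measure_pmf (A (map (dlb n) zs)))"
  proof (intro nn_integral_mono_AE AE_pmfI)
    fix Vi assume Vi: "Vi \<in> set_pmf (A (map (dlb n) zs))"
    obtain V i where Vi': "Vi = (V, i)" by (cases Vi)
    have "map (dlb n) zs \<noteq> []" using zl by auto
    then have iV: "i < length zs \<and> unary_unbiased_op n V"
      using alg_D[OF alg, of "map (dlb n) zs" V i] Vi unfolding Vi' by simp
    have zi: "zs ! i \<in> bitstrings n" using iV zb by auto
    have px: "phi n (zs ! i) \<le> M" unfolding M_def using iV by (intro Phi_ge) simp
    have Mh: "M \<le> n div 2" unfolding M_def by (rule Phi_le)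
    show "(\<integral>\<^sup>+ y. (\<Sum>w\<in>bitstrings n. R w y) * ennreal (1/2^n) \<partial>measure_pmf (fst Vi (zs ! snd Vi))) \<le> ennreal (real (M^2)) + 8"
      unfolding Vi' fst_conv snd_conv R_def using inner_bound[OF _ zi px Mh] iV by blast
  qed
  also have "\<dots> = ennreal (real (M^2)) + 8" by (simp add: measure_pmf.emeasure_space_1)
  finally show ?thesis unfolding M_def .
qed



lemma Gt_Suc_eq:
  "Gt n A (Suc t) = (\<integral>\<^sup>+ zs. Fn n A zs \<partial>measure_pmf (history n (dlb n) A t))"
  unfolding Gt_def Fn_def by (simp add: case_prod_beta)

lemma avg_eq:
  assumes alg: "unary_unbiased_alg n A"
  shows "(\<integral>\<^sup>+ zs. Fn n A zs \<partial>measure_pmf (history n (dlb n) A t)) =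
    (\<integral>\<^sup>+ zs. (\<Sum>w\<in>bitstrings n. Fn n A (tau n w zs)) * ennreal (1/2^n) \<partial>measure_pmf (history n (dlb n) A t))"
proof -
  define H where "H = history n (dlb n) A t"
  define X where "X = (\<integral>\<^sup>+ zs. Fn n A zs \<partial>measure_pmf H)"
  have each: "(\<integral>\<^sup>+ zs. Fn n A (tau n w zs) \<partial>measure_pmf H) = X" for w
  proof -
    have "(\<integral>\<^sup>+ zs. Fn n A (tau n w zs) \<partial>measure_pmf H) = (\<integral>\<^sup>+ zs. Fn n A zs \<partial>measure_pmf (map_pmf (tau n w) H))"
      by simp
    also have "map_pmf (tau n w) H = H" unfolding H_def by (rule map_tau[OF alg])
    finally show ?thesis unfolding X_def .
  qed
  have "(\<integral>\<^sup>+ zs. (\<Sum>w\<in>bitstrings n. Fn n A (tau n w zs)) * ennreal (1/2^n) \<partial>measure_pmf H)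
      = (\<integral>\<^sup>+ zs. (\<Sum>w\<in>bitstrings n. Fn n A (tau n w zs)) \<partial>measure_pmf H) * ennreal (1/2^n)"
    by (rule nn_integral_multc) simp
  also have "(\<integral>\<^sup>+ zs. (\<Sum>w\<in>bitstrings n. Fn n A (tau n w zs)) \<partial>measure_pmf H) =
      (\<Sum>w\<in>bitstrings n. \<integral>\<^sup>+ zs. Fn n A (tau n w zs) \<partial>measure_pmf H)"
    by (rule nn_integral_sum) simp
  also have "\<dots> = of_nat (card (bitstrings n)) * X" using each by simp
  also have "of_nat (card (bitstrings n)) * X * ennreal (1/2^n) = X * (ennreal (2^n) * ennreal (1/2^n))"
    by (simp add: card_bitstrings ennreal_of_nat_eq_real_of_nat mult.commute mult.left_commute)
  also have "ennreal (2^n) * ennreal (1/2^n) = ennreal ((2^n) * (1/2^n))" by (rule ennreal_mult[symmetric]) auto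
  also have "\<dots> = 1" by simp
  finally show ?thesis unfolding X_def H_def by simp
qed

lemma Gt_step:
  assumes alg: "unary_unbiased_alg n A"
  shows "Gt n A (Suc t) \<le> Gt n A t + 8"
proof -
  have "Gt n A (Suc t) = (\<integral>\<^sup>+ zs. (\<Sum>w\<in>bitstrings n. Fn n A (tau n w zs)) * ennreal (1/2^n) \<partial>measure_pmf (history n (dlb n) A t))"
    unfolding Gt_Suc_eq avg_eq[OF alg] ..
  also have "\<dots> \<le> (\<integral>\<^sup>+ zs. ennreal (real ((Phi n zs)^2)) + 8 \<partial>measure_pmf (history n (dlb n) A t))"
    by (intro nn_integral_mono_AE AE_pmfI pt_bound[OF alg])
  also have "\<dots> = Gt n A t + 8"
    unfolding Gt_def by (simp add: nn_integral_add measure_pmf.emeasure_space_1)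
  finally show ?thesis .
qed

lemma Gt_0: "Gt n A 0 \<le> 2"
proof -
  define B where "B = bitstrings n"
  define y0 where "y0 = replicate n False"
  have y0: "y0 \<in> bitstrings n" by (simp add: y0_def bitstrings_def)
  have xw: "xor_bits y0 (hi n 0 w) = w" if "w \<in> B" for w
    using that by (intro nth_equalityI) (auto simp: y0_def B_def bitstrings_def hi_def)
  have o0: "ones y0 0" "zeros y0 0" by (auto simp: ones_def zeros_def)
  have "(\<Sum>w\<in>B. real ((max 0 (phi n (xor_bits y0 (hi n 0 w))))^2)) \<le>
     2^n * real (0^2) + 2^n * (1 + 1) * (\<Sum>i\<in>{0<..n div 2}. 2 * real i * 2^0 / 4^i)"
    using pw[OF y0, of 0 0] o0 unfolding B_def by simp
  also have "\<dots> = 2^n * 2 * (\<Sum>i\<in>{0<..n div 2}. 2 * real i * 2^0 / 4^i)" by simp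
  also have "\<dots> \<le> 2^n * 2 * 1" using baseK[of "n div 2"] by (intro mult_left_mono) auto
  also have "(\<Sum>w\<in>B. real ((max 0 (phi n (xor_bits y0 (hi n 0 w))))^2)) = (\<Sum>w\<in>B. real ((phi n w)^2))"
    using xw by (intro sum.cong) auto
  finally have s: "(\<Sum>w\<in>B. real ((phi n w)^2)) \<le> 2^n * 2" by simp
  have fin: "finite B" unfolding B_def by (rule finite_bitstrings)
  have ne: "B \<noteq> {}" unfolding B_def by (rule bitstrings_ne)
  have "Gt n A 0 = (\<integral>\<^sup>+ x. ennreal (real ((phi n x)^2)) \<partial>measure_pmf (pmf_of_set B))"
    unfolding Gt_def B_def by simp
  also have "\<dots> = (\<Sum>x\<in>B. ennreal (real ((phi n x)^2))) / of_nat (card B)"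
    by (rule nn_integral_pmf_of_set[OF ne fin])
  also have "\<dots> = ennreal (\<Sum>x\<in>B. real ((phi n x)^2)) / ennreal (2^n)"
    by (simp add: B_def card_bitstrings ennreal_of_nat_eq_real_of_nat)
  also have "\<dots> = ennreal ((\<Sum>x\<in>B. real ((phi n x)^2)) / 2^n)"
    by (rule divide_ennreal) (auto intro: sum_nonneg)
  also have "\<dots> \<le> ennreal 2" using s by (intro ennreal_leI) (simp add: field_simps)
  finally show ?thesis by simp
qed

lemma Gt_bound:
  assumes alg: "unary_unbiased_alg n A"
  shows "Gt n A t \<le> ennreal (2 + 8 * real t)"
proof (induction t)
  case 0 then show ?case using Gt_0[of n A] by simp
next
  case (Suc t)
  have "Gt n A (Suc t) \<le> Gt n A t + 8" by (rule Gt_step[OF alg])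
  also have "\<dots> \<le> ennreal (2 + 8 * real t) + 8" using Suc.IH by (rule add_right_mono)
  also have "\<dots> = ennreal (2 + 8 * real (Suc t))"
  proof -
    have "ennreal (2 + 8 * real t + 8) = ennreal (2 + 8 * real t) + ennreal 8"
      by (rule ennreal_plus) auto
    moreover have "2 + 8 * real (Suc t) = 2 + 8 * real t + 8" by simp
    ultimately show ?thesis by simp
  qed
  finally show ?case .
qed



lemma dlb_all_true: "dlb n (replicate n True) = n"
proof -
  have h: "2 * (n div 2) \<le> n" by simp
  have "\<forall>l < n div 2. replicate n True ! (2*l) \<and> replicate n True ! (2*l+1)"
  proof (intro allI impI)
    fix l assume "l < n div 2"
    then have "2*l+1 < n" using h by linarith
    then show "replicate n True ! (2*l) \<and> replicate n True ! (2*l+1)" by simp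
  qed
  then show ?thesis unfolding dlb_def by simp
qed

lemma opt_phi:
  assumes opt: "is_optimum n (dlb n) x" and ev: "even n"
  shows "n div 2 \<le> phi n x"
proof -
  have x: "x \<in> bitstrings n" using opt unfolding is_optimum_def by simp
  have "replicate n True \<in> bitstrings n" by (simp add: bitstrings_def)
  then have ge: "n \<le> dlb n x" using opt dlb_all_true[of n] unfolding is_optimum_def by metis
  have all: "\<forall>l < n div 2. x ! (2*l) \<and> x ! (2*l+1)"
  proof (rule ccontr)
    assume F: "\<not> (\<forall>l < n div 2. x ! (2*l) \<and> x ! (2*l+1))"
    define m where "m = (LEAST l. l < n div 2 \<and> \<not> (x ! (2*l) \<and> x ! (2*l+1)))"
    have "m < n div 2 \<and> \<not> (x ! (2*m) \<and> x ! (2*m+1))" unfolding m_def using F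
      by (metis (mono_tags, lifting) LeastI)
    then have mlt: "m < n div 2" by simp
    have "dlb n x \<le> 2*m+1" using F unfolding dlb_def Let_def m_def by auto
    moreover have "2*m+1 < n"
    proof -
      have "2 * (n div 2) = n" using ev by simp
      then show ?thesis using mlt by linarith
    qed
    ultimately show False using ge by simp
  qed
  have "ones x (2 * (n div 2))" unfolding ones_def
  proof (intro allI impI)
    fix j assume j: "j < 2 * (n div 2)"
    then have "j div 2 < n div 2" by linarith
    then have "x ! (2 * (j div 2)) \<and> x ! (2 * (j div 2) + 1)" using all by blast
    moreover have "j = 2 * (j div 2) \<or> j = 2 * (j div 2) + 1" by linarith
    ultimately show "x ! j" by metis
  qed
  then show ?thesis by (subst phi_ge_iff) simp
qed

lemma prob_noopt:
  assumes alg: "unary_unbiased_alg n A" and ev: "even n" and hpos: "0 < n div 2"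
  shows "1 - (2 + 8 * real k) / real ((n div 2)^2) \<le>
    measure (history n (dlb n) A k) {xs. \<forall>x\<in>set xs. \<not> is_optimum n (dlb n) x}"
proof -
  define h where "h = n div 2"
  define H where "H = history n (dlb n) A k"
  define S where "S = {xs. h \<le> Phi n xs}"
  define Q where "Q = {xs. \<forall>x\<in>set xs. \<not> is_optimum n (dlb n) x}"
  have h0: "0 < real (h^2)" using hpos unfolding h_def by simp
  have "(\<integral>\<^sup>+ xs. ennreal (real (h^2)) * indicator S xs \<partial>measure_pmf H) \<le>
      (\<integral>\<^sup>+ xs. ennreal (real ((Phi n xs)^2)) \<partial>measure_pmf H)"
  proof (intro nn_integral_mono)
    fix xs
    show "ennreal (real (h^2)) * indicator S xs \<le> ennreal (real ((Phi n xs)^2))"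
    proof (cases "xs \<in> S")
      case True
      then have "h^2 \<le> (Phi n xs)^2" unfolding S_def by (simp add: power_mono)
      then show ?thesis using True by (simp add: ennreal_leI)
    qed simp
  qed
  also have "\<dots> \<le> ennreal (2 + 8 * real k)" unfolding H_def using Gt_bound[OF alg] unfolding Gt_def by blast
  finally have "ennreal (real (h^2)) * emeasure H S \<le> ennreal (2 + 8 * real k)"
    by (simp add: nn_integral_cmult_indicator)
  then have "ennreal (real (h^2) * measure H S) \<le> ennreal (2 + 8 * real k)"
    by (simp add: measure_pmf.emeasure_eq_measure ennreal_mult)
  moreover have nn: "0 \<le> 2 + 8 * real k" by simp
  ultimately have "real (h^2) * measure H S \<le> 2 + 8 * real k" using ennreal_le_iff[OF nn] by blast
  then have PS: "measure H S \<le> (2 + 8 * real k) / real (h^2)" using h0 by (simp add: field_simps)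
  have sub: "(- Q) \<inter> set_pmf H \<subseteq> S"
  proof
    fix xs assume xs: "xs \<in> (- Q) \<inter> set_pmf H"
    then obtain x where x: "x \<in> set xs" "is_optimum n (dlb n) x" unfolding Q_def by auto
    have "h \<le> phi n x" unfolding h_def by (rule opt_phi[OF x(2) ev])
    also have "\<dots> \<le> Phi n xs" by (rule Phi_ge[OF x(1)])
    finally show "xs \<in> S" unfolding S_def by simp
  qed
  have "measure H (- Q) = measure H ((- Q) \<inter> set_pmf H)" by (simp add: measure_Int_set_pmf)
  also have "\<dots> \<le> measure H S" using sub by (intro measure_pmf.finite_measure_mono) auto
  finally have "measure H (- Q) \<le> (2 + 8 * real k) / real (h^2)" using PS by simp
  moreover have "measure H (- Q) = 1 - measure H Q"
    using measure_pmf.prob_compl[of Q H] by (simp add: Compl_eq_Diff_UNIV)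
  ultimately show ?thesis unfolding H_def Q_def h_def by simp
qed

lemma runtime_bound:
  assumes alg: "unary_unbiased_alg n A" and ev: "even n" and n24: "24 \<le> n"
  shows "ennreal (1/512 * (real n)^2) \<le> expected_runtime n (dlb n) A"
proof -
  define h where "h = n div 2"
  define K where "K = h^2 div 32"
  define p where "p = (\<lambda>k. measure (history n (dlb n) A k) {xs. \<forall>x\<in>set xs. \<not> is_optimum n (dlb n) x})"
  have nh: "real n = 2 * real h" using ev unfolding h_def by (metis dvd_mult_div_cancel of_nat_mult of_nat_numeral)
  have h12: "12 \<le> h" using n24 unfolding h_def by simp
  have hpos: "0 < n div 2" using h12 unfolding h_def by simp
  have pk: "1/2 \<le> p k" if k: "k < K" for k
  proof -
    have "32 * (k + 1) \<le> 32 * K" using k by simp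
    also have "32 * K \<le> h^2" unfolding K_def by simp
    finally have a: "32 * real (k + 1) \<le> real (h^2)" by (simp only: of_nat_le_iff[symmetric] of_nat_mult)
    have h0: "0 < real (h^2)" using h12 by simp
    have "(2 + 8 * real k) / real (h^2) \<le> 1/2" using a h0 by (simp add: field_simps)
    moreover have "1 - (2 + 8 * real k) / real ((n div 2)^2) \<le> p k"
      using prob_noopt[OF alg ev hpos, of k] unfolding p_def .
    ultimately show ?thesis unfolding h_def by linarith
  qed
  have "(\<Sum>k<K. ennreal (p k)) \<le> (\<Sum>k. ennreal (p k))"
    by (intro sum_le_suminf summableI) auto
  moreover have "(\<Sum>k<K. ennreal (1/2)) \<le> (\<Sum>k<K. ennreal (p k))"
    using pk by (intro sum_mono ennreal_leI) auto
  moreover have "(\<Sum>k<K. ennreal (1/2)) = ennreal (real K / 2)"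
    by (subst sum_ennreal) auto
  moreover have "1/512 * (real n)^2 \<le> real K / 2"
  proof -
    have g: "a < 32 * (a div 32 + 1)" for a :: nat by presburger
    have "h^2 < 32 * (K + 1)" unfolding K_def by (rule g)
    then have "real (h^2) < 32 * (real K + 1)" by (metis of_nat_less_iff of_nat_mult of_nat_numeral of_nat_Suc Suc_eq_plus1 add.commute)
    then have b: "(real h)^2 < 32 * real K + 32" by simp
    have h12r: "12 \<le> real h" using h12 by simp
    have "12 * 12 \<le> real h * real h" using h12r by (intro mult_mono) auto
    then have c: "64 \<le> (real h)^2" by (simp add: power2_eq_square)
    show ?thesis unfolding nh using b c by (simp add: power2_eq_square algebra_simps)
  qed
  ultimately show ?thesis unfolding expected_runtime_def p_def
    by (smt (verit, ccfv_SIG) ennreal_leI order_trans)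
qed

theorem lemma15:
  shows "\<exists>c::real. c > 0 \<and> (\<exists>N::nat. \<forall>n. n \<ge> N \<and> even n \<longrightarrow>
           ennreal (c * (real n)^2) \<le> unary_unbiased_bbc n (dlb n))"
proof (intro exI conjI allI impI)
  show "(0::real) < 1/512" by simp
  fix n :: nat assume n: "24 \<le> n \<and> even n"
  show "ennreal (1/512 * (real n)^2) \<le> unary_unbiased_bbc n (dlb n)"
    unfolding unary_unbiased_bbc_def
    using runtime_bound n by (intro INF_greatest) auto
qed


end
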